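(* Let $\hat q$ be an $n\times n$ parametric matrix and $M$ an $n\times n$ $(\hat q)$-Manin matrix over $\mathfrak R$. Then $$\sum_{k=0}^n(-1)^k e_k\,M^{[n-k]}=0.$$
   Context: $\mathfrak R$ is an associative unital algebra over $\mathbb C$. A parametric $n\times n$ matrix is $\hat q=(q_{ij})$ with nonzero complex entries, $q_{ij}q_{ji}=1$, $q_{ii}=1$. An $n\times n$ matrix $M$ over $\mathfrak R$ is a $(\hat q)$-Manin matrix if $M_{ik}M_{jk}=q_{ji}M_{jk}M_{ik}$ for $i<j$ and all $k$, and $M_{ik}M_{jl}-q_{ji}q_{kl}M_{jl}M_{ik}+q_{kl}M_{il}M_{jk}-q_{ji}M_{jk}M_{il}=0$ for $i<j$, $k<l$. Let $P_{\hat q}=\sum_{i,j}q_{ji}E_{ij}\otimes E_{ji}$ ($E_{ij}$ matrix units); it satisfies $P_{\hat q}^2=1$ and the braid relation, so $s_i\mapsto P_{\hat q}^{(i,i+1)}$ defines an action $\sigma\mapsto P_{\hat q}^\sigma$ of $S_k$ on $(\mathbb C^n)^{\otimes k}$; $A_{\hat q}^{(k)}=\frac1{k!}\sum_{\sigma\in S_k}\mathrm{sgn}(\sigma)P_{\hat q}^{\sigma}$. $M_a$ is $M$ acting on the $a$-th tensor factor. $e_0=1$ and $e_k=\mathrm{tr}_{1,\dots,k}A_{\hat q}^{(k)}M_1\cdots M_k\in\mathfrak R$ (full trace). For $n\times n$ matrices $B,C$ over $\mathfrak R$, $B*C=\mathrm{tr}_1(P_{\hat q}B_1C_2)$ (partial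 trace over the first tensor factor, $B_1=B\otimes1$, $C_2=1\otimes C$). $M^{[0]}=1$ (identity matrix), $M^{[1]}=M$, $M^{[k]}=M^{[k-1]}*M$ for $k>1$. $e_kM^{[n-k]}$ is left multiplication of the matrix by $e_k$. *)

theory Defs
  imports Complex_Main "HOL-Combinatorics.Combinatorics"
begin

text \<open>Indices of the n x n matrices are 0..n-1 (type nat, with bounds).
  The algebra R is a type 'a of class ring_1 together with a structure map
  iota : complex => 'a which is a unital ring homomorphism into the centre
  (this is exactly an associative unital C-algebra structure; c*x := iota c * x).
  Vectors of (C^n)^(tensor k) are indexed by multi-indices: lists of length k with
  entries < n; operators on (C^n)^(tensor k) are matrices indexed by such lists.\<close>

definition is_C_algebra :: "(complex \<Rightarrow> 'a::ring_1) \<Rightarrow> bool" where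
  "is_C_algebra \<iota> \<longleftrightarrow> \<iota> 1 = 1 \<and> (\<forall>a b. \<iota> (a + b) = \<iota> a + \<iota> b)
     \<and> (\<forall>a b. \<iota> (a * b) = \<iota> a * \<iota> b) \<and> (\<forall>a x. \<iota> a * x = x * \<iota> a)"

definition is_parametric :: "nat \<Rightarrow> (nat \<Rightarrow> nat \<Rightarrow> complex) \<Rightarrow> bool" where
  "is_parametric n q \<longleftrightarrow> (\<forall>i<n. \<forall>j<n. q i j \<noteq> 0 \<and> q i j * q j i = 1) \<and> (\<forall>i<n. q i i = 1)"

definition manin :: "(complex \<Rightarrow> 'a::ring_1) \<Rightarrow> nat \<Rightarrow> (nat \<Rightarrow> nat \<Rightarrow> complex)
    \<Rightarrow> (nat \<Rightarrow> nat \<Rightarrow> 'a) \<Rightarrow> bool" where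
  "manin \<iota> n q M \<longleftrightarrow>
     (\<forall>i j k. i < j \<and> j < n \<and> k < n \<longrightarrow> M i k * M j k = \<iota> (q j i) * M j k * M i k) \<and>
     (\<forall>i j k l. i < j \<and> j < n \<and> k < l \<and> l < n \<longrightarrow>
        M i k * M j l - \<iota> (q j i * q k l) * M j l * M i k + \<iota> (q k l) * M i l * M j k
          - \<iota> (q j i) * M j k * M i l = 0)"

text \<open>Matrix units and P_q = sum_{a,b} q_ba E_ab (x) E_ba, as a matrix on C^n (x) C^n
  with entries ((i,j),(k,l)); (A (x) B)_{(i,j),(k,l)} = A_ik B_jl.\<close>
definition Emat :: "nat \<Rightarrow> nat \<Rightarrow> nat \<Rightarrow> nat \<Rightarrow> complex" where
  "Emat a b i j = (if i = a \<and> j = b then 1 else 0)"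

definition Pq :: "nat \<Rightarrow> (nat \<Rightarrow> nat \<Rightarrow> complex) \<Rightarrow> nat \<times> nat \<Rightarrow> nat \<times> nat \<Rightarrow> complex" where
  "Pq n q x y = (\<Sum>a<n. \<Sum>b<n. q b a * (Emat a b (fst x) (fst y) * Emat b a (snd x) (snd y)))"

definition idx :: "nat \<Rightarrow> nat \<Rightarrow> nat list set" where
  "idx n k = {xs. length xs = k \<and> set xs \<subseteq> {..<n}}"

text \<open>P_q acting on the tensor factors p, p+1 (0-based) of (C^n)^(tensor k).\<close>
definition Ploc :: "nat \<Rightarrow> (nat \<Rightarrow> nat \<Rightarrow> complex) \<Rightarrow> nat \<Rightarrow> nat \<Rightarrow> nat list \<Rightarrow> nat list \<Rightarrow> complex" where
  "Ploc n q k p xs ys = Pq n q (xs ! p, xs ! Suc p) (ys ! p, ys ! Suc p) *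
     (if \<forall>r<k. r \<noteq> p \<and> r \<noteq> Suc p \<longrightarrow> xs ! r = ys ! r then 1 else 0)"

definition mmul :: "nat \<Rightarrow> nat \<Rightarrow> (nat list \<Rightarrow> nat list \<Rightarrow> 'a::semiring_0)
    \<Rightarrow> (nat list \<Rightarrow> nat list \<Rightarrow> 'a) \<Rightarrow> nat list \<Rightarrow> nat list \<Rightarrow> 'a" where
  "mmul n k A B xs ys = (\<Sum>zs\<in>idx n k. A xs zs * B zs ys)"

definition mid :: "nat list \<Rightarrow> nat list \<Rightarrow> 'a::{zero,one}" where
  "mid xs ys = (if xs = ys then 1 else 0)"

definition word_perm :: "nat list \<Rightarrow> nat \<Rightarrow> nat" where
  "word_perm w = foldr (\<lambda>p f. transpose p (Suc p) \<circ> f) w id"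

definition word_mat :: "nat \<Rightarrow> (nat \<Rightarrow> nat \<Rightarrow> complex) \<Rightarrow> nat \<Rightarrow> nat list
    \<Rightarrow> nat list \<Rightarrow> nat list \<Rightarrow> complex" where
  "word_mat n q k w = foldr (\<lambda>p A. mmul n k (Ploc n q k p) A) w mid"

text \<open>P_q^sigma: the value of the action s_p |-> P_q^(p,p+1) on sigma, computed
  along some word in the generators representing sigma.\<close>
definition Pperm :: "nat \<Rightarrow> (nat \<Rightarrow> nat \<Rightarrow> complex) \<Rightarrow> nat \<Rightarrow> (nat \<Rightarrow> nat)
    \<Rightarrow> nat list \<Rightarrow> nat list \<Rightarrow> complex" where
  "Pperm n q k \<sigma> = word_mat n q k
     (SOME w. (\<forall>p\<in>set w. Suc p < k) \<and> word_perm w = \<sigma>)"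

definition Aq :: "nat \<Rightarrow> (nat \<Rightarrow> nat \<Rightarrow> complex) \<Rightarrow> nat
    \<Rightarrow> nat list \<Rightarrow> nat list \<Rightarrow> complex" where
  "Aq n q k xs ys = (1 / of_nat (fact k)) *
     (\<Sum>\<sigma>\<in>{\<sigma>. \<sigma> permutes {..<k}}. of_int (sign \<sigma>) * Pperm n q k \<sigma> xs ys)"

text \<open>M acting on tensor factor a (0-based) of (C^n)^(tensor k).\<close>
definition Mloc :: "nat \<Rightarrow> (nat \<Rightarrow> nat \<Rightarrow> 'a::ring_1) \<Rightarrow> nat \<Rightarrow> nat list \<Rightarrow> nat list \<Rightarrow> 'a" where
  "Mloc k M a xs ys = M (xs ! a) (ys ! a) *
     (if \<forall>r<k. r \<noteq> a \<longrightarrow> xs ! r = ys ! r then 1 else 0)"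

definition Mprod :: "nat \<Rightarrow> (nat \<Rightarrow> nat \<Rightarrow> 'a::ring_1) \<Rightarrow> nat \<Rightarrow> nat list \<Rightarrow> nat list \<Rightarrow> 'a" where
  "Mprod n M k = foldr (\<lambda>a A. mmul n k (Mloc k M a) A) [0..<k] mid"

text \<open>e_k = tr_{1..k} A^(k) M_1 ... M_k (e_0 = 1 results automatically).\<close>
definition ecoef :: "(complex \<Rightarrow> 'a::ring_1) \<Rightarrow> nat \<Rightarrow> (nat \<Rightarrow> nat \<Rightarrow> complex)
    \<Rightarrow> (nat \<Rightarrow> nat \<Rightarrow> 'a) \<Rightarrow> nat \<Rightarrow> 'a" where
  "ecoef \<iota> n q M k = (\<Sum>xs\<in>idx n k. \<Sum>ys\<in>idx n k.
       \<iota> (Aq n q k xs ys) * Mprod n M k ys xs)"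

text \<open>B * C = tr_1 (P_q B_1 C_2); (B_1 C_2)_{(i,j),(k,l)} = B_ik C_jl.\<close>
definition qstar :: "(complex \<Rightarrow> 'a::ring_1) \<Rightarrow> nat \<Rightarrow> (nat \<Rightarrow> nat \<Rightarrow> complex)
    \<Rightarrow> (nat \<Rightarrow> nat \<Rightarrow> 'a) \<Rightarrow> (nat \<Rightarrow> nat \<Rightarrow> 'a) \<Rightarrow> nat \<Rightarrow> nat \<Rightarrow> 'a" where
  "qstar \<iota> n q B C j l = (\<Sum>i<n. \<Sum>a<n. \<Sum>b<n. \<iota> (Pq n q (i, j) (a, b)) * (B a i * C b l))"

fun qpow :: "(complex \<Rightarrow> 'a::ring_1) \<Rightarrow> nat \<Rightarrow> (nat \<Rightarrow> nat \<Rightarrow> complex)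
    \<Rightarrow> (nat \<Rightarrow> nat \<Rightarrow> 'a) \<Rightarrow> nat \<Rightarrow> nat \<Rightarrow> nat \<Rightarrow> 'a" where
  "qpow \<iota> n q M 0 = (\<lambda>i j. if i = j then 1 else 0)"
| "qpow \<iota> n q M (Suc 0) = M"
| "qpow \<iota> n q M (Suc (Suc k)) = qstar \<iota> n q (qpow \<iota> n q M (Suc k)) M"

end

theory Submission
  imports Defs
begin

lemma finite_idx[simp]: "finite (idx n k)"
  unfolding idx_def using finite_lists_length_eq[of "{..<n}" k] by (simp add: conj_commute)

lemma idx_iff: "xs \<in> idx n k \<longleftrightarrow> length xs = k \<and> (\<forall>i<k. xs!i < n)"
  by (auto simp: idx_def in_set_conv_nth subset_iff)

lemma sum_single:
  assumes "finite S" "c \<in> S" "\<And>x. x \<in> S \<Longrightarrow> x \<noteq> c \<Longrightarrow> g x = 0"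
  shows "sum g S = g c"
  using assms by (subst sum.remove[OF assms(1,2)]) (simp add: sum.neutral)

lemma prod_list_mset_eq:
  fixes f :: "'b \<Rightarrow> 'c::comm_monoid_mult"
  shows "mset xs = mset ys \<Longrightarrow> prod_list (map f xs) = prod_list (map f ys)"
  by (metis mset_map prod_mset_prod_list)

definition rr :: "(nat \<Rightarrow> nat \<Rightarrow> complex) \<Rightarrow> nat \<Rightarrow> nat \<Rightarrow> complex" where
  "rr q u v = (if v < u then q u v else 1)"

definition rho :: "(nat \<Rightarrow> nat \<Rightarrow> complex) \<Rightarrow> nat \<Rightarrow> nat list \<Rightarrow> complex" where
  "rho q a us = prod_list (map (\<lambda>u. rr q u a) us)"

fun WW :: "(nat \<Rightarrow> nat \<Rightarrow> complex) \<Rightarrow> nat list \<Rightarrow> complex" where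
  "WW q [] = 1"
| "WW q (z # zs) = prod_list (map (rr q z) zs) * WW q zs"

definition swp :: "nat \<Rightarrow> 'b list \<Rightarrow> 'b list" where
  "swp p xs = xs[p := xs ! Suc p, Suc p := xs ! p]"

lemma rr_swap:
  assumes "is_parametric n q" "u < n" "v < n"
  shows "rr q v u = q v u * rr q u v"
  using assms unfolding is_parametric_def rr_def
  by (cases "u < v"; cases "v < u") (auto simp: mult.commute)

lemma rr_nz:
  assumes "is_parametric n q" "u < n" "v < n"
  shows "rr q u v \<noteq> 0"
  using assms unfolding is_parametric_def rr_def by auto

lemma rr_same[simp]: "rr q u u = 1"
  by (simp add: rr_def)

lemma WW_snoc: "WW q (us @ [a]) = WW q us * rho q a us"
  by (induct us) (simp_all add: rho_def algebra_simps)

lemma rho_snoc: "rho q a (us @ [b]) = rho q a us * rr q b a"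
  by (simp add: rho_def)

lemma WW_nz: "is_parametric n q \<Longrightarrow> set zs \<subseteq> {..<n} \<Longrightarrow> WW q zs \<noteq> 0"
  by (induct zs) (auto simp: prod_list_zero_iff rr_nz)

lemma rho_nz: "is_parametric n q \<Longrightarrow> a < n \<Longrightarrow> set zs \<subseteq> {..<n} \<Longrightarrow> rho q a zs \<noteq> 0"
  by (auto simp: rho_def prod_list_zero_iff dest: rr_nz)

lemma length_swp[simp]: "length (swp p xs) = length xs"
  by (simp add: swp_def)

lemma mset_swp: "Suc p < length xs \<Longrightarrow> mset (swp p xs) = mset xs"
  unfolding swp_def by (rule mset_swap) auto

lemma swp_Cons_Suc: "swp (Suc p) (z # zs) = z # swp p zs"
  by (simp add: swp_def)

lemma WW_swp:
  assumes "is_parametric n q" "set xs \<subseteq> {..<n}" "Suc p < length xs"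
  shows "WW q (swp p xs) = q (xs ! Suc p) (xs ! p) * WW q xs"
  using assms(2,3)
proof (induct xs arbitrary: p)
  case Nil then show ?case by simp
next
  case (Cons z zs)
  show ?case
  proof (cases p)
    case 0
    then obtain v rest where zs: "zs = v # rest" using Cons by (cases zs) auto
    have "swp p (z # zs) = v # z # rest" using 0 zs by (simp add: swp_def)
    moreover have "rr q v z = q v z * rr q z v"
      using Cons.prems zs by (intro rr_swap[OF assms(1)]) auto
    ultimately show ?thesis using 0 zs by (simp add: algebra_simps)
  next
    case (Suc p')
    have "prod_list (map (rr q z) (swp p' zs)) = prod_list (map (rr q z) zs)"
      using Cons.prems Suc by (intro prod_list_mset_eq mset_swp) auto
    then show ?thesis using Cons Suc by (simp add: swp_Cons_Suc algebra_simps)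
  qed
qed


lemma word_perm_Cons: "word_perm (p # w) = transpose p (Suc p) \<circ> word_perm w"
  by (simp add: word_perm_def)

lemma word_perm_Nil: "word_perm [] = id"
  by (simp add: word_perm_def)

lemma word_perm_append: "word_perm (u @ v) = word_perm u \<circ> word_perm v"
  by (induct u) (simp_all add: word_perm_Cons word_perm_Nil comp_assoc)

lemma word_perm_permutes:
  "\<forall>p\<in>set w. Suc p < k \<Longrightarrow> word_perm w permutes {..<k}"
proof (induct w)
  case Nil then show ?case by (simp add: word_perm_Nil permutes_id[unfolded id_def])
next
  case (Cons p w)
  then have "transpose p (Suc p) permutes {..<k}" by (intro permutes_swap_id) auto
  with Cons show ?case unfolding word_perm_Cons by (intro permutes_compose) auto
qed

lemma transpose_word:
  "b < k \<Longrightarrow> \<exists>w. (\<forall>p\<in>set w. p < k) \<and> word_perm w = transpose k b"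
proof (induct k arbitrary: b)
  case 0 then show ?case by simp
next
  case (Suc k)
  show ?case
  proof (cases "b = k")
    case True
    then show ?thesis
      by (intro exI[of _ "[k]"]) (auto simp: word_perm_Cons word_perm_Nil transpose_commute)
  next
    case False
    with Suc.prems have "b < k" by simp
    from Suc.hyps[OF this] obtain w where w: "\<forall>p\<in>set w. p < k" "word_perm w = transpose k b" by blast
    have "transpose (Suc k) b = transpose k (Suc k) \<circ> transpose k b \<circ> transpose k (Suc k)"
      using \<open>b < k\<close> by (auto simp: fun_eq_iff transpose_def)
    then show ?thesis using w
      by (intro exI[of _ "[k] @ w @ [k]"])
         (auto simp: word_perm_append word_perm_Cons word_perm_Nil comp_assoc)
  qed
qed

lemma word_exists:
  "\<sigma> permutes {..<k} \<Longrightarrow> \<exists>w. (\<forall>p\<in>set w. Suc p < k) \<and> word_perm w = \<sigma>"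
proof (induct k arbitrary: \<sigma>)
  case 0 then show ?case by (intro exI[of _ "[]"]) (simp add: word_perm_Nil)
next
  case (Suc k)
  have "{..<Suc k} = insert k {..<k}" by auto
  with Suc.prems have "\<sigma> \<in> {p. p permutes insert k {..<k}}" by simp
  then obtain b p where bp: "b \<in> insert k {..<k}" "p permutes {..<k}" "\<sigma> = transpose k b \<circ> p"
    unfolding permutes_insert by auto
  from Suc.hyps[OF bp(2)] obtain w where w: "\<forall>p\<in>set w. Suc p < k" "word_perm w = p" by blast
  obtain w1 where w1: "\<forall>p\<in>set w1. p < k" "word_perm w1 = transpose k b"
  proof (cases "b = k")
    case True then show ?thesis using that[of "[]"] by (simp add: word_perm_Nil)
  next
    case False then show ?thesis using that transpose_word[of b k] bp(1) by auto
  qed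
  show ?case using w w1 bp
    by (intro exI[of _ "w1 @ w"]) (auto simp: word_perm_append)
qed


lemma Pq_eval:
  assumes "a < n" "b < n"
  shows "Pq n q (a, b) (c, d) = (if c = b \<and> d = a then q b a else 0)"
proof -
  have "Pq n q (a, b) (c, d) = (\<Sum>a'<n. \<Sum>b'<n. if b' = b then if a' = a then (if c = b \<and> d = a then q b' a' else 0) else 0 else 0)"
  proof -
    have "\<And>a' b'. q b' a' * (Emat a' b' a c * Emat b' a' b d) = (if b' = b then if a' = a then (if c = b \<and> d = a then q b' a' else 0) else 0 else 0)"
      by (auto simp: Emat_def)
    then show ?thesis unfolding Pq_def fst_conv snd_conv by presburger
  qed
  also have "\<dots> = (if c = b \<and> d = a then q b a else 0)"
    using assms by (simp add: sum.delta)
  finally show ?thesis .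
qed

lemma swp_nth:
  assumes "Suc p < length xs" "r < length xs"
  shows "swp p xs ! r = (if r = p then xs ! Suc p else if r = Suc p then xs ! p else xs ! r)"
  using assms by (auto simp: swp_def nth_list_update)

lemma swp_idx: "xs \<in> idx n k \<Longrightarrow> Suc p < k \<Longrightarrow> swp p xs \<in> idx n k"
  by (auto simp: idx_iff swp_nth)

lemma swp_swp: "Suc p < length xs \<Longrightarrow> swp p (swp p xs) = xs"
  by (intro nth_equalityI) (auto simp: swp_nth)

lemma swp_permute: "Suc p < length xs \<Longrightarrow> permute_list (transpose p (Suc p)) xs = swp p xs"
  by (intro nth_equalityI) (auto simp: permute_list_def swp_nth transpose_def)

lemma Ploc_eval:
  assumes "xs \<in> idx n k" "zs \<in> idx n k" "Suc p < k"
  shows "Ploc n q k p xs zs = (if zs = swp p xs then q (xs ! Suc p) (xs ! p) else 0)"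
proof -
  have len: "length xs = k" "length zs = k" and lt: "xs ! p < n" "xs ! Suc p < n"
    using assms by (auto simp: idx_iff)
  have "zs = swp p xs \<longleftrightarrow> (zs ! p = xs ! Suc p \<and> zs ! Suc p = xs ! p \<and>
      (\<forall>r<k. r \<noteq> p \<and> r \<noteq> Suc p \<longrightarrow> xs ! r = zs ! r))"
  proof
    assume "zs = swp p xs" then show "zs ! p = xs ! Suc p \<and> zs ! Suc p = xs ! p \<and>
      (\<forall>r<k. r \<noteq> p \<and> r \<noteq> Suc p \<longrightarrow> xs ! r = zs ! r)" using len assms(3) by (auto simp: swp_nth)
  next
    assume H: "zs ! p = xs ! Suc p \<and> zs ! Suc p = xs ! p \<and>
      (\<forall>r<k. r \<noteq> p \<and> r \<noteq> Suc p \<longrightarrow> xs ! r = zs ! r)"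
    show "zs = swp p xs" using len assms(3) H by (intro nth_equalityI) (auto simp: swp_nth)
  qed
  then show ?thesis
    unfolding Ploc_def using lt by (auto simp: Pq_eval)
qed

lemma mmul_Ploc:
  assumes "xs \<in> idx n k" "Suc p < k"
  shows "mmul n k (Ploc n q k p) B xs ys = q (xs ! Suc p) (xs ! p) * B (swp p xs) ys"
proof -
  have "mmul n k (Ploc n q k p) B xs ys = Ploc n q k p xs (swp p xs) * B (swp p xs) ys"
    unfolding mmul_def using assms
    by (intro sum_single) (auto simp: Ploc_eval swp_idx)
  then show ?thesis using assms by (simp add: Ploc_eval swp_idx)
qed

definition Fm :: "(nat \<Rightarrow> nat \<Rightarrow> complex) \<Rightarrow> (nat \<Rightarrow> nat) \<Rightarrow> nat list \<Rightarrow> nat list \<Rightarrow> complex" where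
  "Fm q \<sigma> xs ys = (if ys = permute_list \<sigma> xs then WW q ys / WW q xs else 0)"

lemma word_mat_eval:
  assumes par: "is_parametric n q"
  shows "\<forall>p\<in>set w. Suc p < k \<Longrightarrow> xs \<in> idx n k \<Longrightarrow> word_mat n q k w xs ys = Fm q (word_perm w) xs ys"
proof (induct w arbitrary: xs)
  case Nil
  have "WW q xs \<noteq> 0" using Nil.prems par by (intro WW_nz) (auto simp: idx_def)
  then show ?case by (auto simp: word_mat_def word_perm_Nil Fm_def mid_def)
next
  case (Cons p w)
  have p: "Suc p < k" and w: "\<forall>p\<in>set w. Suc p < k" using Cons.prems by auto
  have len: "length xs = k" using Cons.prems by (auto simp: idx_iff)
  have "word_mat n q k (p # w) xs ys = q (xs ! Suc p) (xs ! p) * word_mat n q k w (swp p xs) ys"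
    unfolding word_mat_def using mmul_Ploc[OF Cons.prems(2) p] by simp
  also have "\<dots> = q (xs ! Suc p) (xs ! p) * Fm q (word_perm w) (swp p xs) ys"
    using Cons.hyps[OF w swp_idx[OF Cons.prems(2) p]] by simp
  also have "\<dots> = Fm q (word_perm (p # w)) xs ys"
  proof -
    have perm: "permute_list (word_perm (p # w)) xs = permute_list (word_perm w) (swp p xs)"
      unfolding word_perm_Cons using word_perm_permutes[OF w] len p
      by (simp add: permute_list_compose swp_permute)
    have "WW q (swp p xs) = q (xs ! Suc p) (xs ! p) * WW q xs"
      using Cons.prems(2) p by (intro WW_swp[OF par]) (auto simp: idx_def)
    moreover have "q (xs ! Suc p) (xs ! p) \<noteq> 0"
      using par Cons.prems(2) p by (auto simp: is_parametric_def idx_iff)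
    ultimately show ?thesis unfolding Fm_def perm by auto
  qed
  finally show ?case .
qed

lemma Pperm_eval:
  assumes par: "is_parametric n q" and s: "\<sigma> permutes {..<k}" and xs: "xs \<in> idx n k"
  shows "Pperm n q k \<sigma> xs ys = Fm q \<sigma> xs ys"
proof -
  let ?P = "\<lambda>w. (\<forall>p\<in>set w. Suc p < k) \<and> word_perm w = \<sigma>"
  have "?P (SOME w. ?P w)" using word_exists[OF s] by (rule someI_ex)
  then show ?thesis unfolding Pperm_def using word_mat_eval[OF par _ xs] by auto
qed

definition NN :: "nat \<Rightarrow> nat list \<Rightarrow> nat list \<Rightarrow> int" where
  "NN k xs ys = (\<Sum>\<sigma>\<in>{\<sigma>. \<sigma> permutes {..<k}}. if permute_list \<sigma> xs = ys then sign \<sigma> else 0)"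

lemma Aq_eval:
  assumes par: "is_parametric n q" and xs: "xs \<in> idx n k"
  shows "Aq n q k xs ys = 1 / of_nat (fact k) * (of_int (NN k xs ys) * WW q ys / WW q xs)"
proof -
  have "(\<Sum>\<sigma>\<in>{\<sigma>. \<sigma> permutes {..<k}}. of_int (sign \<sigma>) * Pperm n q k \<sigma> xs ys) =
        (\<Sum>\<sigma>\<in>{\<sigma>. \<sigma> permutes {..<k}}. of_int (if permute_list \<sigma> xs = ys then sign \<sigma> else 0) * (WW q ys / WW q xs))"
    using Pperm_eval[OF par _ xs] by (intro sum.cong refl) (auto simp: Fm_def)
  also have "\<dots> = of_int (NN k xs ys) * WW q ys / WW q xs"
    unfolding NN_def of_int_sum sum_distrib_right by (simp add: sum_divide_distrib)
  finally show ?thesis unfolding Aq_def by simp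
qed


definition Xp :: "(nat \<Rightarrow> nat \<Rightarrow> 'a::ring_1) \<Rightarrow> nat \<Rightarrow> nat list \<Rightarrow> nat list \<Rightarrow> 'a" where
  "Xp M m ys xs = prod_list (map (\<lambda>t. M (ys ! t) (xs ! t)) [0..<m])"

lemma Mprod_fold:
  fixes M :: "nat \<Rightarrow> nat \<Rightarrow> 'a::ring_1"
  assumes "a \<le> k" "xs \<in> idx n k" "ys \<in> idx n k"
  shows "foldr (\<lambda>a A. mmul n k (Mloc k M a) A) [a..<k] mid xs ys =
    (if \<forall>t<a. xs ! t = ys ! t then prod_list (map (\<lambda>t. M (xs ! t) (ys ! t)) [a..<k]) else 0)"
  using assms(1) assms(2)
proof (induct a arbitrary: xs rule: inc_induct)
  case base
  have "xs = ys \<longleftrightarrow> (\<forall>t<k. xs ! t = ys ! t)"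
    using base assms(3) by (auto simp: idx_iff intro: nth_equalityI)
  then show ?case by (simp add: mid_def)
next
  case (step a)
  let ?F = "foldr (\<lambda>a A. mmul n k (Mloc k M a) A) [Suc a..<k] mid"
  have lenx: "length xs = k" and leny: "length ys = k" using step assms(3) by (auto simp: idx_iff)
  have IH: "\<And>zs. zs \<in> idx n k \<Longrightarrow> ?F zs ys = (if \<forall>t<Suc a. zs ! t = ys ! t then
        prod_list (map (\<lambda>t. M (zs ! t) (ys ! t)) [Suc a..<k]) else 0)"
    using step by blast
  have up: "[a..<k] = a # [Suc a..<k]" using step by (simp add: upt_conv_Cons)
  have LHS: "foldr (\<lambda>a A. mmul n k (Mloc k M a) A) [a..<k] mid xs ys =
      (\<Sum>zs\<in>idx n k. Mloc k M a xs zs * ?F zs ys)"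
    unfolding up by (simp add: mmul_def)
  show ?case
  proof (cases "\<forall>t<a. xs ! t = ys ! t")
    case True
    let ?c = "xs[a := ys ! a]"
    have c: "?c \<in> idx n k" using step assms(3) by (auto simp: idx_iff nth_list_update)
    have "(\<Sum>zs\<in>idx n k. Mloc k M a xs zs * ?F zs ys) = Mloc k M a xs ?c * ?F ?c ys"
    proof (rule sum_single[OF finite_idx c])
      fix zs assume zs: "zs \<in> idx n k" "zs \<noteq> ?c"
      show "Mloc k M a xs zs * ?F zs ys = 0"
      proof (cases "(\<forall>r<k. r \<noteq> a \<longrightarrow> xs ! r = zs ! r) \<and> zs ! a = ys ! a")
        case True
        then have "zs = ?c" using zs lenx step(2) by (intro nth_equalityI) (auto simp: idx_iff nth_list_update)
        then show ?thesis using zs by simp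
      next
        case False
        then show ?thesis using zs IH[OF zs(1)] by (auto simp: Mloc_def)
      qed
    qed
    also have "\<dots> = M (xs ! a) (ys ! a) * prod_list (map (\<lambda>t. M (xs ! t) (ys ! t)) [Suc a..<k])"
    proof -
      have "?F ?c ys = prod_list (map (\<lambda>t. M (xs ! t) (ys ! t)) [Suc a..<k])"
        using IH[OF c] True lenx step(2) by (auto simp: nth_list_update less_Suc_eq intro!: arg_cong[where f=prod_list])
      moreover have "Mloc k M a xs ?c = M (xs ! a) (ys ! a)"
        using lenx step(2) by (auto simp: Mloc_def nth_list_update)
      ultimately show ?thesis by simp
    qed
    finally show ?thesis using LHS True up by simp
  next
    case False
    have "(\<Sum>zs\<in>idx n k. Mloc k M a xs zs * ?F zs ys) = 0"
    proof (rule sum.neutral, rule ballI)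
      fix zs assume zs: "zs \<in> idx n k"
      show "Mloc k M a xs zs * ?F zs ys = 0"
        using False IH[OF zs] step(2) by (auto simp: Mloc_def)
    qed
    then show ?thesis using LHS False by auto
  qed
qed

lemma Mprod_eval:
  assumes "xs \<in> idx n k" "ys \<in> idx n k"
  shows "Mprod n M k ys xs = Xp M k ys xs"
  using Mprod_fold[of 0 k ys n xs M] assms unfolding Mprod_def Xp_def by simp

lemma Xp_snoc:
  assumes "length ys = m" "length xs = m"
  shows "Xp M (Suc m) (ys @ [i]) (xs @ [l]) = Xp M m ys xs * M i l"
proof -
  have A: "map (\<lambda>t. M ((ys @ [i]) ! t) ((xs @ [l]) ! t)) [0..<m] = map (\<lambda>t. M (ys ! t) (xs ! t)) [0..<m]"
    using assms by (auto simp: nth_append)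
  have B: "Xp M (Suc m) (ys @ [i]) (xs @ [l]) = prod_list (map (\<lambda>t. M ((ys @ [i]) ! t) ((xs @ [l]) ! t)) [0..<m]) * M i l"
  proof -
    have "(ys @ [i]) ! m = i" "(xs @ [l]) ! m = l" using assms by (simp_all add: nth_append)
    then show ?thesis unfolding Xp_def by simp
  qed
  show ?thesis unfolding B A by (simp add: Xp_def)
qed


lemma sum_perm_compose_left:
  assumes p: "p permutes S"
  shows "sum (\<lambda>s. f (p \<circ> s)) {s. s permutes S} = sum f {s. s permutes S}"
proof (rule sum.reindex_bij_witness[where i = "\<lambda>t. inv p \<circ> t" and j = "\<lambda>s. p \<circ> s"])
  fix a assume "a \<in> {s. s permutes S}"
  then show "inv p \<circ> (p \<circ> a) = a" "inv p \<circ> a \<in> {s. s permutes S}"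
    using permutes_inv_o(2)[OF p] permutes_compose[OF _ permutes_inv[OF p]]
    by (auto simp: comp_assoc[symmetric])
next
  fix b assume "b \<in> {s. s permutes S}"
  then show "p \<circ> (inv p \<circ> b) = b" "p \<circ> b \<in> {s. s permutes S}"
    using permutes_inv_o(1)[OF p] permutes_compose[OF _ p]
    by (auto simp: comp_assoc[symmetric])
qed simp

lemma perm_permutation: "p permutes {..<(k::nat)} \<Longrightarrow> permutation p"
  by (rule permutes_imp_permutation[where S="{..<k}"]) simp_all

lemma NN_row:
  assumes p: "p permutes {..<k}" and len: "length xs = k"
  shows "NN k (permute_list p xs) ys = sign p * NN k xs ys"
proof -
  have "NN k (permute_list p xs) ys =
      (\<Sum>s\<in>{s. s permutes {..<k}}. if permute_list (p \<circ> s) xs = ys then sign p * sign (p \<circ> s) else 0)"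
    unfolding NN_def
  proof (intro sum.cong refl)
    fix s assume s: "s \<in> {s. s permutes {..<k}}"
    have "sign p * sign (p \<circ> s) = sign s"
      using s p by (simp add: sign_compose perm_permutation)
    moreover have "permute_list s (permute_list p xs) = permute_list (p \<circ> s) xs"
      using s len by (simp add: permute_list_compose)
    ultimately show "(if permute_list s (permute_list p xs) = ys then sign s else 0) =
        (if permute_list (p \<circ> s) xs = ys then sign p * sign (p \<circ> s) else 0)" by simp
  qed
  also have "\<dots> = (\<Sum>s\<in>{s. s permutes {..<k}}. if permute_list s xs = ys then sign p * sign s else 0)"
    by (rule sum_perm_compose_left[OF p, where f = "\<lambda>s. if permute_list s xs = ys then sign p * sign s else 0"])
  also have "\<dots> = sign p * NN k xs ys"
    unfolding NN_def sum_distrib_left by (intro sum.cong refl) simp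
  finally show ?thesis .
qed

lemma NN_col:
  assumes p: "p permutes {..<k}" and len: "length ys = k" "length xs = k"
  shows "NN k xs (permute_list p ys) = sign p * NN k xs ys"
proof -
  have ip: "inv p permutes {..<k}" using permutes_inv[OF p] .
  have "NN k xs (permute_list p ys) =
      (\<Sum>s\<in>{s. s permutes {..<k}}. if permute_list (s \<circ> inv p) xs = ys then sign p * sign (s \<circ> inv p) else 0)"
    unfolding NN_def
  proof (intro sum.cong refl)
    fix s assume s: "s \<in> {s. s permutes {..<k}}"
    have "sign p * sign (s \<circ> inv p) = sign s"
      using s p ip by (simp add: sign_compose perm_permutation sign_inverse)
    moreover have "permute_list s xs = permute_list p ys \<longleftrightarrow> permute_list (s \<circ> inv p) xs = ys"
    proof -
      have A: "permute_list (s \<circ> inv p) xs = permute_list (inv p) (permute_list s xs)"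
        using ip len by (simp add: permute_list_compose)
      have B: "permute_list (inv p) (permute_list p ys) = ys"
        using ip len by (simp add: permute_list_compose[symmetric] permutes_inv_o(1)[OF p])
      have C: "permute_list p (permute_list (inv p) zs) = zs" if "length zs = k" for zs
        using p that by (simp add: permute_list_compose[symmetric] permutes_inv_o(2)[OF p])
      have L: "length (permute_list s xs) = k" using len by simp
      show ?thesis
      proof
        assume "permute_list s xs = permute_list p ys"
        then show "permute_list (s \<circ> inv p) xs = ys" using A B by simp
      next
        assume "permute_list (s \<circ> inv p) xs = ys"
        then show "permute_list s xs = permute_list p ys" using A C[OF L] by simp
      qed
    qed
    ultimately show "(if permute_list s xs = permute_list p ys then sign s else 0) =
        (if permute_list (s \<circ> inv p) xs = ys then sign p * sign (s \<circ> inv p) else 0)" by simp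
  qed
  also have "\<dots> = (\<Sum>s\<in>{s. s permutes {..<k}}. if permute_list s xs = ys then sign p * sign s else 0)"
    by (rule sum_permutations_compose_right[OF ip, where f = "\<lambda>s. if permute_list s xs = ys then sign p * sign s else 0", symmetric])
  also have "\<dots> = sign p * NN k xs ys"
    unfolding NN_def sum_distrib_left by (intro sum.cong refl) simp
  finally show ?thesis .
qed

lemma NN_mset:
  assumes "NN k xs ys \<noteq> 0" "length xs = k"
  shows "mset ys = mset xs"
proof -
  have "\<exists>s. s permutes {..<k} \<and> permute_list s xs = ys"
  proof (rule ccontr)
    assume "\<not> ?thesis"
    then have "NN k xs ys = 0" unfolding NN_def by (intro sum.neutral) auto
    then show False using assms(1) by simp
  qed
  then obtain s where "s permutes {..<k}" "permute_list s xs = ys" by blast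
  then show ?thesis using assms(2) by auto
qed

lemma NN_dup:
  assumes "a < k" "b < k" "a \<noteq> b" "xs ! a = xs ! b" "length xs = k"
  shows "NN k xs ys = 0"
proof -
  have t: "transpose a b permutes {..<k}" using assms by (intro permutes_swap_id) auto
  have "permute_list (transpose a b) xs = xs"
    using assms by (intro nth_equalityI) (auto simp: permute_list_def transpose_def)
  then have "NN k xs ys = sign (transpose a b) * NN k xs ys"
    using NN_row[OF t assms(5), of ys] by simp
  then show ?thesis using assms(3) by (simp add: sign_swap_id)
qed

lemma NN_nondistinct:
  assumes "\<not> distinct xs" "length xs = k"
  shows "NN k xs ys = 0"
proof -
  obtain a b where "a < k" "b < k" "a \<noteq> b" "xs ! a = xs ! b"
    using assms by (auto simp: distinct_conv_nth)
  then show ?thesis using NN_dup assms(2) by blast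
qed

lemma NN_zero: "NN 0 [] [] = 1"
  by (simp add: NN_def)


lemma PL_snoc:
  assumes t: "t permutes {..<m}" and len: "length zs = m"
  shows "permute_list t (zs @ [a]) = permute_list t zs @ [a]"
proof (rule nth_equalityI)
  show "length (permute_list t (zs @ [a])) = length (permute_list t zs @ [a])" by simp
next
  fix i assume "i < length (permute_list t (zs @ [a]))"
  then have i: "i < Suc m" using len by simp
  show "permute_list t (zs @ [a]) ! i = (permute_list t zs @ [a]) ! i"
  proof (cases "i = m")
    case True
    then have "t i = i" using permutes_not_in[OF t] by simp
    then show ?thesis using True len by (simp add: permute_list_def nth_append)
  next
    case False
    then have "i < m" using i by simp
    then have "t i < m" using permutes_in_image[OF t] by simp
    then show ?thesis using \<open>i < m\<close> len by (simp add: permute_list_def nth_append)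
  qed
qed

lemma PL_trans:
  assumes "b < m" "length xs = m"
  shows "permute_list (transpose m b) (xs @ [j]) = xs[b := j] @ [xs ! b]"
  using assms by (intro nth_equalityI) (auto simp: permute_list_def nth_append transpose_def nth_list_update)

lemma NN_rec:
  assumes lx: "length xs = m" and ly: "length ys = m"
  shows "NN (Suc m) (xs @ [j]) (ys @ [l]) =
    (if j = l then NN m xs ys else 0) - (\<Sum>i<m. if xs ! i = l then NN m (xs[i := j]) ys else 0)"
proof -
  let ?f = "\<lambda>s. if permute_list s (xs @ [j]) = ys @ [l] then sign s else (0::int)"
  have ins: "{..<Suc m} = insert m {..<m}" by auto
  have "NN (Suc m) (xs @ [j]) (ys @ [l]) = sum ?f {s. s permutes insert m {..<m}}"
    unfolding NN_def ins ..
  also have "\<dots> = (\<Sum>b\<in>insert m {..<m}. \<Sum>t\<in>{s. s permutes {..<m}}. ?f (transpose m b \<circ> t))"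
    by (rule sum_over_permutations_insert) auto
  also have "\<dots> = (\<Sum>t\<in>{s. s permutes {..<m}}. ?f (transpose m m \<circ> t)) +
      (\<Sum>b<m. \<Sum>t\<in>{s. s permutes {..<m}}. ?f (transpose m b \<circ> t))"
    by (simp add: sum.insert)
  also have "(\<Sum>t\<in>{s. s permutes {..<m}}. ?f (transpose m m \<circ> t)) = (if j = l then NN m xs ys else 0)"
  proof -
    have "(\<Sum>t\<in>{s. s permutes {..<m}}. ?f (transpose m m \<circ> t)) =
        (\<Sum>t\<in>{s. s permutes {..<m}}. if j = l then (if permute_list t xs = ys then sign t else 0) else 0)"
    proof (intro sum.cong refl)
      fix t assume "t \<in> {s. s permutes {..<m}}"
      then have t: "t permutes {..<m}" by simp
      show "?f (transpose m m \<circ> t) = (if j = l then (if permute_list t xs = ys then sign t else 0) else 0)"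
        using PL_snoc[OF t lx, of j] ly by auto
    qed
    then show ?thesis unfolding NN_def by simp
  qed
  also have "(\<Sum>b<m. \<Sum>t\<in>{s. s permutes {..<m}}. ?f (transpose m b \<circ> t)) =
      (\<Sum>b<m. - (if xs ! b = l then NN m (xs[b := j]) ys else 0))"
  proof (intro sum.cong refl)
    fix b assume "b \<in> {..<m}"
    then have b: "b < m" by simp
    have "(\<Sum>t\<in>{s. s permutes {..<m}}. ?f (transpose m b \<circ> t)) =
        (\<Sum>t\<in>{s. s permutes {..<m}}. - (if xs ! b = l then (if permute_list t (xs[b := j]) = ys then sign t else 0) else 0))"
    proof (intro sum.cong refl)
      fix t assume "t \<in> {s. s permutes {..<m}}"
      then have t: "t permutes {..<m}" by simp
      have t': "t permutes {..<length (xs @ [j])}" using permutes_subset[OF t] lx by auto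
      have "permute_list (transpose m b \<circ> t) (xs @ [j]) = permute_list t (xs[b := j]) @ [xs ! b]"
        using permute_list_compose[OF t', of "transpose m b"] PL_trans[OF b lx] PL_snoc[OF t, of "xs[b := j]" "xs ! b"] lx by simp
      moreover have "sign (transpose m b \<circ> t) = - sign t"
        using b sign_compose[OF permutation_swap_id perm_permutation[OF t], of m b] by (simp add: sign_swap_id)
      moreover have "length (permute_list t (xs[b := j])) = length ys" using lx ly by simp
      ultimately show "?f (transpose m b \<circ> t) = - (if xs ! b = l then (if permute_list t (xs[b := j]) = ys then sign t else 0) else 0)"
        by auto
    qed
    also have "\<dots> = - (if xs ! b = l then NN m (xs[b := j]) ys else 0)"
      unfolding NN_def by (simp add: sum_negf)
    finally show "(\<Sum>t\<in>{s. s permutes {..<m}}. ?f (transpose m b \<circ> t)) = - (if xs ! b = l then NN m (xs[b := j]) ys else 0)" .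
  qed
  finally show ?thesis by (simp add: sum_negf)
qed


locale CH =
  fixes \<iota> :: "complex \<Rightarrow> 'a::ring_1" and n :: nat and q :: "nat \<Rightarrow> nat \<Rightarrow> complex"
    and M :: "nat \<Rightarrow> nat \<Rightarrow> 'a"
  assumes alg: "is_C_algebra \<iota>" and par: "is_parametric n q" and man: "manin \<iota> n q M"
begin

lemma i1[simp]: "\<iota> 1 = 1" using alg unfolding is_C_algebra_def by blast
lemma iadd: "\<iota> (a + b) = \<iota> a + \<iota> b" using alg unfolding is_C_algebra_def by blast
lemma imul: "\<iota> (a * b) = \<iota> a * \<iota> b" using alg unfolding is_C_algebra_def by blast
lemma icomm: "\<iota> a * x = x * \<iota> a" using alg unfolding is_C_algebra_def by blast

lemma i0[simp]: "\<iota> 0 = 0"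
proof -
  have "\<iota> 0 = \<iota> 0 + \<iota> 0" using iadd[of 0 0] by simp
  then show ?thesis by simp
qed

lemma ineg: "\<iota> (- a) = - \<iota> a"
proof -
  have "\<iota> (- a) + \<iota> a = 0" using iadd[of "-a" a] by simp
  then show ?thesis by (simp add: eq_neg_iff_add_eq_0)
qed

lemma idiff: "\<iota> (a - b) = \<iota> a - \<iota> b"
  using iadd[of a "-b"] ineg[of b] by simp

lemma isum: "\<iota> (sum f S) = (\<Sum>x\<in>S. \<iota> (f x))"
  by (induct S rule: infinite_finite_induct) (simp_all add: iadd)

lemma iof_nat[simp]: "\<iota> (of_nat k) = of_nat k"
  by (induct k) (simp_all add: iadd)

lemma iof_int[simp]: "\<iota> (of_int k) = of_int k"
  by (cases k rule: int_cases) (simp_all add: ineg idiff)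

lemma inum1: "\<iota> (- 1) = - 1" by (simp add: ineg)

lemma iinv: "a \<noteq> 0 \<Longrightarrow> \<iota> (1 / a) * \<iota> a = 1"
  by (simp flip: imul)

lemma icomm2: "x * (\<iota> a * y) = \<iota> a * (x * y)"
proof -
  have "x * (\<iota> a * y) = (x * \<iota> a) * y" by (simp add: mult.assoc)
  also have "\<dots> = (\<iota> a * x) * y" by (simp add: icomm)
  finally show ?thesis by (simp add: mult.assoc)
qed

lemma icomm_ii: "\<iota> a * (\<iota> b * y) = \<iota> b * (\<iota> a * y)"
  by (simp add: mult.assoc[symmetric] imul[symmetric] mult.commute)

lemma iqq: "u < n \<Longrightarrow> v < n \<Longrightarrow> \<iota> (q u v) * (\<iota> (q v u) * y) = y"
  using par by (simp add: mult.assoc[symmetric] imul[symmetric] is_parametric_def)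

lemma qdiag: "u < n \<Longrightarrow> q u u = 1" using par by (simp add: is_parametric_def)

lemma qnz: "u < n \<Longrightarrow> v < n \<Longrightarrow> q u v \<noteq> 0" using par by (simp add: is_parametric_def)

definition KK :: "nat \<Rightarrow> nat \<Rightarrow> nat \<Rightarrow> nat \<Rightarrow> 'a" where
  "KK a b c d = M a d * M b c + \<iota> (q d c) * (M a c * M b d) - \<iota> (q b a) * (M b d * M a c)
      - \<iota> (q b a) * (\<iota> (q d c) * (M b c * M a d))"

lemma KK_swap_rows:
  assumes "a < n" "b < n" "c < n" "d < n"
  shows "KK a b c d = - (\<iota> (q b a) * KK b a c d)"
  unfolding KK_def using assms by (simp add: algebra_simps iqq icomm_ii[of "q b a" "q d c"])

lemma KK_swap_cols:
  assumes "a < n" "b < n" "c < n" "d < n"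
  shows "KK a b c d = \<iota> (q d c) * KK a b d c"
  unfolding KK_def using assms by (simp add: algebra_simps iqq icomm_ii[of "q d c" "q b a"])

lemma KK_lt:
  assumes "a < b" "b < n" "c < d" "d < n"
  shows "KK a b c d = 0"
proof -
  have R: "M a c * M b d - \<iota> (q b a * q c d) * M b d * M a c + \<iota> (q c d) * M a d * M b c
          - \<iota> (q b a) * M b c * M a d = 0"
    using man assms unfolding manin_def by blast
  have "\<iota> (q d c) * (M a c * M b d - \<iota> (q b a * q c d) * M b d * M a c + \<iota> (q c d) * M a d * M b c
          - \<iota> (q b a) * M b c * M a d) = KK a b c d"
    unfolding KK_def imul using assms
    by (simp add: algebra_simps iqq icomm_ii[of "q d c" "q b a"])
  then show ?thesis using R by simp
qed

lemma col_rel: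
  assumes "a < n" "b < n" "c < n"
  shows "M a c * M b c = \<iota> (q b a) * (M b c * M a c)"
proof (cases a b rule: linorder_cases)
  case less
  then show ?thesis using man assms unfolding manin_def by (simp add: mult.assoc)
next
  case equal
  then show ?thesis using assms by (simp add: qdiag)
next
  case greater
  then have "M b c * M a c = \<iota> (q a b) * (M a c * M b c)"
    using man assms unfolding manin_def by (simp add: mult.assoc)
  then show ?thesis using assms by (simp add: iqq)
qed

lemma KK_zero:
  assumes "a < n" "b < n" "c < n" "d < n"
  shows "KK a b c d = 0"
proof -
  have main: "KK a b c d = 0" if "a \<le> b" "c \<le> d" "a < n" "b < n" "c < n" "d < n" for a b c d
  proof (cases "a = b")
    case True
    then show ?thesis unfolding KK_def using that by (simp add: qdiag)
  next
    case False
    show ?thesis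
    proof (cases "c = d")
      case True
      have "KK a b c d = (M a c * M b c - \<iota> (q b a) * (M b c * M a c)) + (M a c * M b c - \<iota> (q b a) * (M b c * M a c))"
        unfolding KK_def using True that by (simp add: qdiag algebra_simps)
      then show ?thesis using col_rel[of a b c] that by simp
    next
      case False
      then show ?thesis using KK_lt[of a b c d] that \<open>a \<noteq> b\<close> by simp
    qed
  qed
  show ?thesis
  proof (cases "a \<le> b")
    case True
    show ?thesis
    proof (cases "c \<le> d")
      case True then show ?thesis using main \<open>a \<le> b\<close> assms by blast
    next
      case False then show ?thesis using main[of a b d c] \<open>a \<le> b\<close> assms KK_swap_cols[of a b c d] by simp
    qed
  next
    case False
    show ?thesis
    proof (cases "c \<le> d")
      case True then show ?thesis using main[of b a c d] False assms KK_swap_rows[of a b c d] by simp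
    next
      case F2: False then show ?thesis using main[of b a d c] False assms KK_swap_rows[of a b c d] KK_swap_cols[of b a c d] by simp
    qed
  qed
qed

end


definition LL :: "(nat \<Rightarrow> nat \<Rightarrow> 'a::ring_1) \<Rightarrow> nat \<Rightarrow> nat list \<Rightarrow> nat list \<Rightarrow> 'a" where
  "LL M p ys us = prod_list (map (\<lambda>t. M (ys ! t) (us ! t)) [0..<p])"
definition RR :: "(nat \<Rightarrow> nat \<Rightarrow> 'a::ring_1) \<Rightarrow> nat \<Rightarrow> nat \<Rightarrow> nat list \<Rightarrow> nat list \<Rightarrow> 'a" where
  "RR M p m ys us = prod_list (map (\<lambda>t. M (ys ! t) (us ! t)) [Suc (Suc p)..<m])"

lemma Xp_split:
  assumes "Suc p < m"
  shows "Xp M m ys us = LL M p ys us * (M (ys ! p) (us ! p) * (M (ys ! Suc p) (us ! Suc p) * RR M p m ys us))"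
proof -
  have "[0..<m] = [0..<p] @ [p..<m]" using upt_add_eq_append[of 0 p "m - p"] assms by simp
  moreover have "[p..<m] = p # Suc p # [Suc (Suc p)..<m]" using assms by (simp add: upt_conv_Cons)
  ultimately show ?thesis unfolding Xp_def LL_def RR_def by simp
qed

lemma LL_swp1: "Suc p < length ys \<Longrightarrow> LL M p (swp p ys) us = LL M p ys us"
  unfolding LL_def by (intro arg_cong[where f = prod_list] map_cong refl) (auto simp: swp_nth)
lemma LL_swp2: "Suc p < length us \<Longrightarrow> LL M p ys (swp p us) = LL M p ys us"
  unfolding LL_def by (intro arg_cong[where f = prod_list] map_cong refl) (auto simp: swp_nth)
lemma RR_swp1: "Suc p < length ys \<Longrightarrow> length ys = m \<Longrightarrow> RR M p m (swp p ys) us = RR M p m ys us"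
  unfolding RR_def by (intro arg_cong[where f = prod_list] map_cong refl) (auto simp: swp_nth)
lemma RR_swp2: "Suc p < length us \<Longrightarrow> length us = m \<Longrightarrow> RR M p m ys (swp p us) = RR M p m ys us"
  unfolding RR_def by (intro arg_cong[where f = prod_list] map_cong refl) (auto simp: swp_nth)

lemma swp_nth_p: "Suc p < length ys \<Longrightarrow> swp p ys ! p = ys ! Suc p"
  by (simp add: swp_nth)
lemma swp_nth_Sp: "Suc p < length ys \<Longrightarrow> swp p ys ! Suc p = ys ! p"
  by (simp add: swp_nth)

lemma sum_swp:
  assumes "Suc p < m"
  shows "(\<Sum>ys\<in>idx n m. g (swp p ys)) = (\<Sum>ys\<in>idx n m. g ys)"
  by (rule sum.reindex_bij_witness[where i = "swp p" and j = "swp p"])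
     (use assms in \<open>auto simp: swp_idx swp_swp idx_iff swp_nth\<close>)

lemma NN_swp_col:
  assumes "Suc p < m" "length ys = m" "length zs = m"
  shows "NN m zs (swp p ys) = - NN m zs ys"
proof -
  have t: "transpose p (Suc p) permutes {..<m}" using assms by (intro permutes_swap_id) auto
  show ?thesis using NN_col[OF t assms(2,3)] swp_permute[of p ys] assms by (simp add: sign_swap_id)
qed

lemma NN_swp_row:
  assumes "Suc p < m" "length zs = m"
  shows "NN m (swp p zs) ys = - NN m zs ys"
proof -
  have t: "transpose p (Suc p) permutes {..<m}" using assms by (intro permutes_swap_id) auto
  show ?thesis using NN_row[OF t assms(2)] swp_permute[of p zs] assms by (simp add: sign_swap_id)
qed

context CH begin

lemma half: "(S::'a) + S = 0 \<Longrightarrow> S = 0"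
proof -
  assume "S + S = 0"
  have "\<iota> (1/2) * (S + S) = (\<iota> (1/2) + \<iota> (1/2)) * S" by (simp add: algebra_simps)
  also have "\<dots> = \<iota> (1/2 + 1/2) * S" by (simp only: iadd)
  also have "\<dots> = S" by simp
  finally have "S = \<iota> (1/2) * (S + S)" by simp
  then show "S = 0" using \<open>S + S = 0\<close> by simp
qed

lemma PW:
  assumes ys: "ys \<in> idx n m" and us: "us \<in> idx n m" and p: "Suc p < m"
  shows "Xp M m ys (swp p us) + \<iota> (q (us ! Suc p) (us ! p)) * Xp M m ys us =
     \<iota> (q (ys ! Suc p) (ys ! p)) * (Xp M m (swp p ys) (swp p us) + \<iota> (q (us ! Suc p) (us ! p)) * Xp M m (swp p ys) us)"
proof -
  have ly: "length ys = m" and lu: "length us = m" using ys us by (auto simp: idx_iff)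
  define a where "a = ys ! p"
  define b where "b = ys ! Suc p"
  define c where "c = us ! p"
  define d where "d = us ! Suc p"
  have lt: "a < n" "b < n" "c < n" "d < n" using ys us p by (auto simp: idx_iff a_def b_def c_def d_def)
  define L where "L = LL M p ys us"
  define R where "R = RR M p m ys us"
  have L: "LL M p ys (swp p us) = L" "LL M p (swp p ys) (swp p us) = L" "LL M p (swp p ys) us = L"
    using p ly lu by (simp_all add: L_def LL_swp1 LL_swp2)
  have R: "RR M p m ys (swp p us) = R" "RR M p m (swp p ys) (swp p us) = R" "RR M p m (swp p ys) us = R"
    using p ly lu by (simp_all add: R_def RR_swp1 RR_swp2)
  have X1: "Xp M m ys (swp p us) = L * (M a d * (M b c * R))"
    using Xp_split[OF p, of M ys "swp p us"] L R p lu by (simp add: swp_nth a_def b_def c_def d_def)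
  have X2: "Xp M m ys us = L * (M a c * (M b d * R))"
    using Xp_split[OF p, of M ys us] p by (simp add: a_def b_def c_def d_def L_def R_def)
  have X3: "Xp M m (swp p ys) (swp p us) = L * (M b d * (M a c * R))"
    using Xp_split[OF p, of M "swp p ys" "swp p us"] L R p lu ly by (simp add: swp_nth a_def b_def c_def d_def)
  have X4: "Xp M m (swp p ys) us = L * (M b c * (M a d * R))"
    using Xp_split[OF p, of M "swp p ys" us] L R p ly by (simp add: swp_nth a_def b_def c_def d_def)
  have "L * (KK a b c d * R) = L * (M a d * (M b c * R)) + \<iota> (q d c) * (L * (M a c * (M b d * R)))
     - \<iota> (q b a) * (L * (M b d * (M a c * R)) + \<iota> (q d c) * (L * (M b c * (M a d * R))))"
    unfolding KK_def by (simp add: algebra_simps icomm2[of L])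
  moreover have "KK a b c d = 0" using KK_zero lt by simp
  ultimately show ?thesis unfolding X1 X2 X3 X4 by (simp add: a_def b_def c_def d_def)
qed

definition Psi :: "nat \<Rightarrow> nat list \<Rightarrow> nat list \<Rightarrow> 'a" where
  "Psi m zs us = (\<Sum>ys\<in>idx n m. \<iota> (of_int (NN m zs ys) * WW q ys) * Xp M m ys us)"

definition Psit :: "nat \<Rightarrow> nat list \<Rightarrow> nat list \<Rightarrow> 'a" where
  "Psit m zs us = (\<Sum>ys\<in>idx n m. \<iota> (of_int (NN m zs ys) * WW q ys / WW q us) * Xp M m ys us)"

lemma Psi_swap:
  assumes zs: "zs \<in> idx n m" and us: "us \<in> idx n m" and p: "Suc p < m"
  shows "Psi m zs (swp p us) = - (\<iota> (q (us ! Suc p) (us ! p)) * Psi m zs us)"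
proof -
  define cc where "cc ys = \<iota> (of_int (NN m zs ys) * WW q ys)" for ys
  define F where "F ys = Xp M m ys (swp p us) + \<iota> (q (us ! Suc p) (us ! p)) * Xp M m ys us" for ys
  define S where "S = (\<Sum>ys\<in>idx n m. cc ys * F ys)"
  have S1: "S = Psi m zs (swp p us) + \<iota> (q (us ! Suc p) (us ! p)) * Psi m zs us"
    unfolding S_def F_def Psi_def cc_def
    by (simp add: algebra_simps sum.distrib sum_distrib_left icomm_ii)
  have S2: "S = (\<Sum>ys\<in>idx n m. cc (swp p ys) * F (swp p ys))"
    unfolding S_def using sum_swp[OF p, of "\<lambda>ys. cc ys * F ys" n] by simp
  have E: "cc (swp p ys) * F (swp p ys) = - (cc ys * F ys)" if ys: "ys \<in> idx n m" for ys
  proof -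
    have ly: "length ys = m" and lz: "length zs = m" using ys zs by (auto simp: idx_iff)
    have A: "cc (swp p ys) = - (\<iota> (q (ys ! Suc p) (ys ! p)) * cc ys)"
      unfolding cc_def using NN_swp_col[OF p ly lz] WW_swp[OF par, of ys p] ys p ly
      by (simp add: imul[symmetric] ineg[symmetric] idx_def algebra_simps)
    have B: "F ys = \<iota> (q (ys ! Suc p) (ys ! p)) * F (swp p ys)"
      unfolding F_def using PW[OF ys us p] .
    have C: "cc (swp p ys) * F (swp p ys) = - (\<iota> (q (ys ! Suc p) (ys ! p)) * (cc ys * F (swp p ys)))"
      unfolding A by (simp add: mult.assoc)
    have D: "cc ys * F ys = \<iota> (q (ys ! Suc p) (ys ! p)) * (cc ys * F (swp p ys))"
      unfolding B by (simp add: cc_def icomm_ii)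
    show ?thesis unfolding C D ..
  qed
  have "S = (\<Sum>ys\<in>idx n m. - (cc ys * F ys))" unfolding S2 using E by (intro sum.cong) auto
  then have "S = - S" by (simp add: sum_negf S_def)
  then have "S = 0" using half[of S] by (simp add: eq_neg_iff_add_eq_0)
  then show ?thesis using S1 by (simp add: eq_neg_iff_add_eq_0 add.commute)
qed

lemma Psit_eq:
  assumes "us \<in> idx n m"
  shows "Psit m zs us = \<iota> (1 / WW q us) * Psi m zs us"
  unfolding Psit_def Psi_def sum_distrib_left
  by (intro sum.cong refl) (simp add: mult.assoc[symmetric] imul[symmetric] field_simps)

lemma Psit_col:
  assumes zs: "zs \<in> idx n m" and us: "us \<in> idx n m" and p: "Suc p < m"
  shows "Psit m zs (swp p us) = - Psit m zs us"
proof -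
  have W: "WW q (swp p us) = q (us ! Suc p) (us ! p) * WW q us"
    using WW_swp[OF par, of us p] us p by (auto simp: idx_def)
  have nz: "q (us ! Suc p) (us ! p) \<noteq> 0"
    using us p qnz[of "us ! Suc p" "us ! p"] by (auto simp: idx_iff)
  have nz2: "WW q us \<noteq> 0" using us by (intro WW_nz[OF par]) (auto simp: idx_def)
  have "Psit m zs (swp p us) = \<iota> (1 / WW q (swp p us)) * - (\<iota> (q (us ! Suc p) (us ! p)) * Psi m zs us)"
    using Psit_eq[OF swp_idx[OF us p]] Psi_swap[OF zs us p] by simp
  also have "\<dots> = - (\<iota> (1 / WW q (swp p us) * q (us ! Suc p) (us ! p)) * Psi m zs us)"
    by (simp only: imul mult.assoc mult_minus_right)
  also have "1 / WW q (swp p us) * q (us ! Suc p) (us ! p) = 1 / WW q us"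
    using W nz nz2 by simp
  finally show ?thesis using Psit_eq[OF us] by simp
qed

lemma Psit_row:
  assumes zs: "zs \<in> idx n m" and p: "Suc p < m"
  shows "Psit m (swp p zs) us = - Psit m zs us"
proof -
  have lz: "length zs = m" using zs by (auto simp: idx_iff)
  show ?thesis unfolding Psit_def NN_swp_row[OF p lz]
    by (simp add: ineg sum_negf)
qed

end


lemma idx_snoc_sum:
  "(\<Sum>xs\<in>idx n (Suc m). f xs) = (\<Sum>xs\<in>idx n m. \<Sum>a<n. f (xs @ [a]))"
proof -
  have "(\<Sum>xs\<in>idx n m. \<Sum>a<n. f (xs @ [a])) = (\<Sum>(xs, a)\<in>idx n m \<times> {..<n}. f (xs @ [a]))"
    by (simp add: sum.cartesian_product)
  also have "\<dots> = (\<Sum>xs\<in>idx n (Suc m). f xs)"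
  proof -
    have T: "ys \<noteq> [] \<and> butlast ys \<in> idx n m \<and> last ys < n" if ys: "ys \<in> idx n (Suc m)" for ys
    proof -
      have ne: "ys \<noteq> []" using ys by (auto simp: idx_iff)
      have "last ys \<in> set ys" using ne by simp
      then have "last ys < n" using ys by (auto simp: idx_def)
      moreover have "butlast ys \<in> idx n m" using ys by (auto simp: idx_def dest: in_set_butlastD)
      ultimately show ?thesis using ne by simp
    qed
    show ?thesis
      by (rule sum.reindex_bij_witness[where i = "\<lambda>ys. (butlast ys, last ys)" and j = "\<lambda>(xs, a). xs @ [a]"])
         (use T in \<open>auto simp: idx_def\<close>)
  qed
  finally show ?thesis by simp
qed

lemma idx_update: "xs \<in> idx n m \<Longrightarrow> v < n \<Longrightarrow> xs[i := v] \<in> idx n m"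
  by (auto simp: idx_def dest: set_update_subset_insert[THEN subsetD])

lemma sum_idx_update:
  assumes "k < m" "a < n" "b < n"
  shows "(\<Sum>xs\<in>idx n m. if xs ! k = b then g xs else 0) = (\<Sum>zs\<in>idx n m. if zs ! k = a then g (zs[k := b]) else 0)"
proof -
  have "(\<Sum>xs\<in>idx n m. if xs ! k = b then g xs else 0) = (\<Sum>xs\<in>{xs \<in> idx n m. xs ! k = b}. g xs)"
    by (simp add: sum.inter_filter)
  also have "\<dots> = (\<Sum>zs\<in>{zs \<in> idx n m. zs ! k = a}. g (zs[k := b]))"
  proof (rule sum.reindex_bij_witness[where j = "\<lambda>xs. xs[k := a]" and i = "\<lambda>zs. zs[k := b]"])
    fix xs assume xs: "xs \<in> {xs \<in> idx n m. xs ! k = b}"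
    then have lk: "k < length xs" using assms by (auto simp: idx_iff)
    show "(xs[k := a])[k := b] = xs" using xs lk list_update_id[of xs k] by (simp add: list_update_overwrite)
    show "xs[k := a] \<in> {zs \<in> idx n m. zs ! k = a}" using xs lk assms by (simp add: idx_update)
    show "g ((xs[k := a])[k := b]) = g xs" using xs lk list_update_id[of xs k] by (simp add: list_update_overwrite)
  next
    fix zs assume zs: "zs \<in> {zs \<in> idx n m. zs ! k = a}"
    then have lk: "k < length zs" using assms by (auto simp: idx_iff)
    show "(zs[k := b])[k := a] = zs" using zs lk list_update_id[of zs k] by (simp add: list_update_overwrite)
    show "zs[k := b] \<in> {xs \<in> idx n m. xs ! k = b}" using zs lk assms by (simp add: idx_update)
  qed
  also have "\<dots> = (\<Sum>zs\<in>idx n m. if zs ! k = a then g (zs[k := b]) else 0)"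
    by (simp add: sum.inter_filter)
  finally show ?thesis .
qed

lemma sum_if_const: "(\<Sum>x\<in>A. if P then f x else 0) = (if P then sum f A else 0)"
  by (cases P) simp_all

lemma rho_mset: "mset xs = mset ys \<Longrightarrow> rho q a xs = rho q a ys"
  unfolding rho_def by (rule prod_list_mset_eq)

lemma rho_update:
  assumes "i < length zs"
  shows "rho q a (zs[i := v]) * rr q (zs ! i) a = rho q a zs * rr q v a"
  using assms unfolding rho_def
proof (induct zs arbitrary: i)
  case Nil then show ?case by simp
next
  case (Cons z zs)
  then show ?case by (cases i) (auto simp: algebra_simps)
qed

definition kap :: "(nat \<Rightarrow> nat \<Rightarrow> complex) \<Rightarrow> nat \<Rightarrow> nat \<Rightarrow> nat list \<Rightarrow> complex" where
  "kap q j l zs = rho q l zs / (rho q j zs * rr q l j)"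

lemma kap_mset: "mset xs = mset ys \<Longrightarrow> kap q j l xs = kap q j l ys"
  unfolding kap_def using rho_mset by metis

context CH begin

definition Eterm :: "nat \<Rightarrow> 'a" where
  "Eterm m = (\<Sum>xs\<in>idx n m. \<Sum>ys\<in>idx n m. \<iota> (of_int (NN m xs ys) * WW q ys / WW q xs) * Xp M m ys xs)"

definition Gam :: "nat \<Rightarrow> nat \<Rightarrow> nat \<Rightarrow> 'a" where
  "Gam m j l = (\<Sum>xs\<in>idx n m. \<Sum>ys\<in>idx n m.
     \<iota> (of_int (NN (Suc m) (xs @ [j]) (ys @ [l])) * WW q (ys @ [l]) / WW q (xs @ [j])) * Xp M m ys xs)"

definition Tsum :: "nat \<Rightarrow> nat \<Rightarrow> nat \<Rightarrow> nat \<Rightarrow> 'a" where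
  "Tsum m j l i = (\<Sum>zs\<in>idx n m. if zs ! i = j then \<iota> (kap q j l zs) * Psit m zs (zs[i := l]) else 0)"

lemma WWnz: "zs \<in> idx n m \<Longrightarrow> WW q zs \<noteq> 0"
  by (rule WW_nz[OF par]) (auto simp: idx_def)

lemma rhonz: "zs \<in> idx n m \<Longrightarrow> a < n \<Longrightarrow> rho q a zs \<noteq> 0"
  by (rule rho_nz[OF par]) (auto simp: idx_def)

lemma ecoef_eval: "ecoef \<iota> n q M m = \<iota> (1 / of_nat (fact m)) * Eterm m"
  unfolding ecoef_def Eterm_def sum_distrib_left
proof (intro sum.cong refl)
  fix xs ys assume xs: "xs \<in> idx n m" and ys: "ys \<in> idx n m"
  show "\<iota> (Aq n q m xs ys) * Mprod n M m ys xs =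
      \<iota> (1 / of_nat (fact m)) * (\<iota> (of_int (NN m xs ys) * WW q ys / WW q xs) * Xp M m ys xs)"
    unfolding Aq_eval[OF par xs] Mprod_eval[OF xs ys] by (simp only: imul mult.assoc)
qed

lemma G2:
  assumes "j < n"
  shows "(\<Sum>xs\<in>idx n m. \<Sum>ys\<in>idx n m. \<iota> (of_int (NN m xs ys) * WW q (ys @ [j]) / WW q (xs @ [j])) * Xp M m ys xs) = Eterm m"
  unfolding Eterm_def
proof (intro sum.cong refl)
  fix xs ys assume xs: "xs \<in> idx n m" and ys: "ys \<in> idx n m"
  show "\<iota> (of_int (NN m xs ys) * WW q (ys @ [j]) / WW q (xs @ [j])) * Xp M m ys xs =
        \<iota> (of_int (NN m xs ys) * WW q ys / WW q xs) * Xp M m ys xs"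
  proof (cases "NN m xs ys = 0")
    case False
    then have "mset ys = mset xs" using NN_mset xs by (auto simp: idx_iff)
    then have r: "rho q j ys = rho q j xs" by (rule rho_mset)
    have "rho q j xs \<noteq> 0" using rhonz[OF xs assms] .
    then have d: "WW q (ys @ [j]) / WW q (xs @ [j]) = WW q ys / WW q xs"
      unfolding WW_snoc r by simp
    have "of_int (NN m xs ys) * WW q (ys @ [j]) / WW q (xs @ [j]) = of_int (NN m xs ys) * WW q ys / WW q xs"
      by (simp only: times_divide_eq_right[symmetric] d)
    then show ?thesis by simp
  qed simp
qed

lemma gl: "\<iota> (of_int (A - sum B I) * a / b) * X = \<iota> (of_int A * a / b) * X - (\<Sum>i\<in>I. \<iota> (of_int (B i) * a / b) * X)"
proof -
  have "of_int (A - sum B I) * a / b = of_int A * a / b - (\<Sum>i\<in>I. of_int (B i) * a / b)"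
    by (simp add: of_int_diff of_int_sum left_diff_distrib sum_distrib_right diff_divide_distrib sum_divide_distrib)
  then show ?thesis by (simp add: idiff isum left_diff_distrib sum_distrib_right)
qed

lemma gif: "\<iota> (of_int (if P then N else 0) * a / b) * X = (if P then \<iota> (of_int N * a / b) * X else 0)"
  by simp

lemma G1:
  assumes "j < n" "l < n"
  shows "Gam m j l = (if j = l then Eterm m else 0) -
    (\<Sum>i<m. \<Sum>xs\<in>idx n m. if xs ! i = l then (\<Sum>ys\<in>idx n m.
        \<iota> (of_int (NN m (xs[i := j]) ys) * WW q (ys @ [l]) / WW q (xs @ [j])) * Xp M m ys xs) else 0)"
proof -
  have "Gam m j l = (\<Sum>xs\<in>idx n m. \<Sum>ys\<in>idx n m.
      (if j = l then \<iota> (of_int (NN m xs ys) * WW q (ys @ [l]) / WW q (xs @ [j])) * Xp M m ys xs else 0)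
      - (\<Sum>i<m. if xs ! i = l then \<iota> (of_int (NN m (xs[i := j]) ys) * WW q (ys @ [l]) / WW q (xs @ [j])) * Xp M m ys xs else 0))"
    unfolding Gam_def
  proof (intro sum.cong refl)
    fix xs ys assume xs: "xs \<in> idx n m" and ys: "ys \<in> idx n m"
    have lx: "length xs = m" and ly: "length ys = m" using xs ys by (auto simp: idx_iff)
    show "\<iota> (of_int (NN (Suc m) (xs @ [j]) (ys @ [l])) * WW q (ys @ [l]) / WW q (xs @ [j])) * Xp M m ys xs =
      (if j = l then \<iota> (of_int (NN m xs ys) * WW q (ys @ [l]) / WW q (xs @ [j])) * Xp M m ys xs else 0)
      - (\<Sum>i<m. if xs ! i = l then \<iota> (of_int (NN m (xs[i := j]) ys) * WW q (ys @ [l]) / WW q (xs @ [j])) * Xp M m ys xs else 0)"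
      unfolding NN_rec[OF lx ly] gl gif ..
  qed
  also have "\<dots> = (if j = l then (\<Sum>xs\<in>idx n m. \<Sum>ys\<in>idx n m. \<iota> (of_int (NN m xs ys) * WW q (ys @ [l]) / WW q (xs @ [j])) * Xp M m ys xs) else 0)
     - (\<Sum>xs\<in>idx n m. \<Sum>ys\<in>idx n m. \<Sum>i<m. if xs ! i = l then \<iota> (of_int (NN m (xs[i := j]) ys) * WW q (ys @ [l]) / WW q (xs @ [j])) * Xp M m ys xs else 0)"
    by (simp add: sum_subtractf)
  also have "(\<Sum>xs\<in>idx n m. \<Sum>ys\<in>idx n m. \<Sum>i<m. if xs ! i = l then \<iota> (of_int (NN m (xs[i := j]) ys) * WW q (ys @ [l]) / WW q (xs @ [j])) * Xp M m ys xs else 0)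
     = (\<Sum>i<m. \<Sum>xs\<in>idx n m. if xs ! i = l then (\<Sum>ys\<in>idx n m.
        \<iota> (of_int (NN m (xs[i := j]) ys) * WW q (ys @ [l]) / WW q (xs @ [j])) * Xp M m ys xs) else 0)"
  proof -
    have "(\<Sum>xs\<in>idx n m. \<Sum>ys\<in>idx n m. \<Sum>i<m. if xs ! i = l then \<iota> (of_int (NN m (xs[i := j]) ys) * WW q (ys @ [l]) / WW q (xs @ [j])) * Xp M m ys xs else 0)
      = (\<Sum>xs\<in>idx n m. \<Sum>i<m. \<Sum>ys\<in>idx n m. if xs ! i = l then \<iota> (of_int (NN m (xs[i := j]) ys) * WW q (ys @ [l]) / WW q (xs @ [j])) * Xp M m ys xs else 0)"
      by (intro sum.cong refl) (rule sum.swap)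
    also have "\<dots> = (\<Sum>i<m. \<Sum>xs\<in>idx n m. \<Sum>ys\<in>idx n m. if xs ! i = l then \<iota> (of_int (NN m (xs[i := j]) ys) * WW q (ys @ [l]) / WW q (xs @ [j])) * Xp M m ys xs else 0)"
      by (rule sum.swap)
    finally show ?thesis by (simp only: sum_if_const)
  qed
  finally show ?thesis using G2[OF assms(1), of m] by (cases "j = l") simp_all
qed

end


context CH begin

lemma rrnz: "u < n \<Longrightarrow> v < n \<Longrightarrow> rr q u v \<noteq> 0"
  by (rule rr_nz[OF par])

lemma G3:
  assumes i: "i < m" and j: "j < n" and l: "l < n"
  shows "(\<Sum>xs\<in>idx n m. if xs ! i = l then (\<Sum>ys\<in>idx n m.
        \<iota> (of_int (NN m (xs[i := j]) ys) * WW q (ys @ [l]) / WW q (xs @ [j])) * Xp M m ys xs) else 0)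
     = Tsum m j l i"
proof -
  have "(\<Sum>xs\<in>idx n m. if xs ! i = l then (\<Sum>ys\<in>idx n m.
        \<iota> (of_int (NN m (xs[i := j]) ys) * WW q (ys @ [l]) / WW q (xs @ [j])) * Xp M m ys xs) else 0)
    = (\<Sum>zs\<in>idx n m. if zs ! i = j then (\<Sum>ys\<in>idx n m.
        \<iota> (of_int (NN m ((zs[i := l])[i := j]) ys) * WW q (ys @ [l]) / WW q (zs[i := l] @ [j])) * Xp M m ys (zs[i := l])) else 0)"
    by (rule sum_idx_update[OF i j l])
  also have "\<dots> = Tsum m j l i"
    unfolding Tsum_def
  proof (intro sum.cong refl)
    fix zs assume zs: "zs \<in> idx n m"
    have lz: "length zs = m" using zs by (auto simp: idx_iff)
    show "(if zs ! i = j then (\<Sum>ys\<in>idx n m.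
        \<iota> (of_int (NN m ((zs[i := l])[i := j]) ys) * WW q (ys @ [l]) / WW q (zs[i := l] @ [j])) * Xp M m ys (zs[i := l])) else 0)
      = (if zs ! i = j then \<iota> (kap q j l zs) * Psit m zs (zs[i := l]) else 0)"
    proof (cases "zs ! i = j")
      case True
      have upd: "(zs[i := l])[i := j] = zs" using True lz i list_update_id[of zs i] by (simp add: list_update_overwrite)
      have zs': "zs[i := l] \<in> idx n m" using zs l by (rule idx_update)
      have "\<iota> (of_int (NN m zs ys) * WW q (ys @ [l]) / WW q (zs[i := l] @ [j])) * Xp M m ys (zs[i := l]) =
          \<iota> (kap q j l zs) * (\<iota> (of_int (NN m zs ys) * WW q ys / WW q (zs[i := l])) * Xp M m ys (zs[i := l]))"
        if ys: "ys \<in> idx n m" for ys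
      proof (cases "NN m zs ys = 0")
        case False
        then have "mset ys = mset zs" using NN_mset lz by blast
        then have r: "rho q l ys = rho q l zs" by (rule rho_mset)
        have ru: "rho q j (zs[i := l]) = rho q j zs * rr q l j"
          using rho_update[of i zs q j l] True lz i by simp
        have nz: "WW q (zs[i := l]) \<noteq> 0" "rho q j zs \<noteq> 0" "rr q l j \<noteq> 0"
          using WWnz[OF zs'] rhonz[OF zs j] rrnz[OF l j] by auto
        have E: "of_int (NN m zs ys) * WW q (ys @ [l]) / WW q (zs[i := l] @ [j]) =
            kap q j l zs * (of_int (NN m zs ys) * WW q ys / WW q (zs[i := l]))"
          unfolding WW_snoc r ru kap_def using nz by (simp add: field_simps)
        show ?thesis unfolding E imul mult.assoc ..
      qed simp
      then show ?thesis unfolding upd Psit_def sum_distrib_left using True by simp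
    qed simp
  qed
  finally show ?thesis .
qed

lemma G4:
  assumes i: "Suc i < m" and j: "j < n" and l: "l < n"
  shows "Tsum m j l i = Tsum m j l (Suc i)"
proof -
  have "Tsum m j l (Suc i) = (\<Sum>zs\<in>idx n m. (\<lambda>zs. if zs ! Suc i = j then \<iota> (kap q j l zs) * Psit m zs (zs[Suc i := l]) else 0) (swp i zs))"
    unfolding Tsum_def by (rule sum_swp[OF i, symmetric])
  also have "\<dots> = Tsum m j l i"
    unfolding Tsum_def
  proof (intro sum.cong refl)
    fix zs assume zs: "zs \<in> idx n m"
    have lz: "length zs = m" using zs by (auto simp: idx_iff)
    have zs': "zs[i := l] \<in> idx n m" using zs l by (rule idx_update)
    have a: "swp i zs ! Suc i = zs ! i" using i lz by (simp add: swp_nth)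
    have b: "kap q j l (swp i zs) = kap q j l zs" using mset_swp[of i zs] i lz by (intro kap_mset) simp
    have c: "(swp i zs)[Suc i := l] = swp i (zs[i := l])"
      using i lz by (intro nth_equalityI) (auto simp: swp_nth nth_list_update)
    have d: "Psit m (swp i zs) (swp i (zs[i := l])) = Psit m zs (zs[i := l])"
      using Psit_row[OF zs i, of "swp i (zs[i := l])"] Psit_col[OF zs zs' i] by simp
    show "(if swp i zs ! Suc i = j then \<iota> (kap q j l (swp i zs)) * Psit m (swp i zs) ((swp i zs)[Suc i := l]) else 0) =
        (if zs ! i = j then \<iota> (kap q j l zs) * Psit m zs (zs[i := l]) else 0)"
      unfolding a b c d ..
  qed
  finally show ?thesis by simp
qed

lemma G5:
  assumes j: "j < n" and l: "l < n"
  shows "Tsum (Suc m) j l m = \<iota> (q j l) * (\<Sum>c<n. Gam m j c * M c l)"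
proof -
  have "Tsum (Suc m) j l m = (\<Sum>zs\<in>idx n m. \<Sum>a<n. if (zs @ [a]) ! m = j then \<iota> (kap q j l (zs @ [a])) * Psit (Suc m) (zs @ [a]) ((zs @ [a])[m := l]) else 0)"
    unfolding Tsum_def idx_snoc_sum ..
  also have "\<dots> = (\<Sum>zs\<in>idx n m. \<iota> (kap q j l (zs @ [j])) * Psit (Suc m) (zs @ [j]) (zs @ [l]))"
  proof (intro sum.cong refl)
    fix zs assume zs: "zs \<in> idx n m"
    have lz: "length zs = m" using zs by (auto simp: idx_iff)
    have "(\<Sum>a<n. if (zs @ [a]) ! m = j then \<iota> (kap q j l (zs @ [a])) * Psit (Suc m) (zs @ [a]) ((zs @ [a])[m := l]) else 0)
        = (\<Sum>a<n. if a = j then \<iota> (kap q j l (zs @ [a])) * Psit (Suc m) (zs @ [a]) (zs @ [l]) else 0)"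
      using lz by (intro sum.cong refl) (simp add: nth_append list_update_append)
    also have "\<dots> = \<iota> (kap q j l (zs @ [j])) * Psit (Suc m) (zs @ [j]) (zs @ [l])"
      using j by (simp add: sum.delta)
    finally show "(\<Sum>a<n. if (zs @ [a]) ! m = j then \<iota> (kap q j l (zs @ [a])) * Psit (Suc m) (zs @ [a]) ((zs @ [a])[m := l]) else 0)
        = \<iota> (kap q j l (zs @ [j])) * Psit (Suc m) (zs @ [j]) (zs @ [l])" .
  qed
  also have "\<dots> = (\<Sum>zs\<in>idx n m. \<Sum>ys\<in>idx n m. \<Sum>c<n. \<iota> (q j l) * (\<iota> (of_int (NN (Suc m) (zs @ [j]) (ys @ [c])) * WW q (ys @ [c]) / WW q (zs @ [j])) * Xp M m ys zs * M c l))"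
  proof (intro sum.cong refl)
    fix zs assume zs: "zs \<in> idx n m"
    have lz: "length zs = m" using zs by (auto simp: idx_iff)
    have "\<iota> (kap q j l (zs @ [j])) * Psit (Suc m) (zs @ [j]) (zs @ [l]) =
        (\<Sum>ys\<in>idx n m. \<Sum>c<n. \<iota> (kap q j l (zs @ [j])) * (\<iota> (of_int (NN (Suc m) (zs @ [j]) (ys @ [c])) * WW q (ys @ [c]) / WW q (zs @ [l])) * Xp M (Suc m) (ys @ [c]) (zs @ [l])))"
      unfolding Psit_def idx_snoc_sum sum_distrib_left ..
    also have "\<dots> = (\<Sum>ys\<in>idx n m. \<Sum>c<n. \<iota> (q j l) * (\<iota> (of_int (NN (Suc m) (zs @ [j]) (ys @ [c])) * WW q (ys @ [c]) / WW q (zs @ [j])) * Xp M m ys zs * M c l))"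
    proof (intro sum.cong refl)
      fix ys c assume ys: "ys \<in> idx n m" and c: "c \<in> {..<n}"
      have ly: "length ys = m" using ys by (auto simp: idx_iff)
      have nz: "WW q zs \<noteq> 0" "rho q j zs \<noteq> 0" "rho q l zs \<noteq> 0" "rr q l j \<noteq> 0"
        using WWnz[OF zs] rhonz[OF zs j] rhonz[OF zs l] rrnz[OF l j] by auto
      have rjl: "rr q j l = q j l * rr q l j" using rr_swap[OF par l j] .
      have E: "kap q j l (zs @ [j]) * (of_int (NN (Suc m) (zs @ [j]) (ys @ [c])) * WW q (ys @ [c]) / WW q (zs @ [l]))
          = q j l * (of_int (NN (Suc m) (zs @ [j]) (ys @ [c])) * WW q (ys @ [c]) / WW q (zs @ [j]))"
        unfolding kap_def rho_snoc WW_snoc[of q zs] rjl using nz by (simp add: field_simps)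
      show "\<iota> (kap q j l (zs @ [j])) * (\<iota> (of_int (NN (Suc m) (zs @ [j]) (ys @ [c])) * WW q (ys @ [c]) / WW q (zs @ [l])) * Xp M (Suc m) (ys @ [c]) (zs @ [l]))
          = \<iota> (q j l) * (\<iota> (of_int (NN (Suc m) (zs @ [j]) (ys @ [c])) * WW q (ys @ [c]) / WW q (zs @ [j])) * Xp M m ys zs * M c l)"
        unfolding Xp_snoc[OF ly lz] mult.assoc[symmetric] imul[symmetric] E ..
    qed
    finally show "\<iota> (kap q j l (zs @ [j])) * Psit (Suc m) (zs @ [j]) (zs @ [l]) =
        (\<Sum>ys\<in>idx n m. \<Sum>c<n. \<iota> (q j l) * (\<iota> (of_int (NN (Suc m) (zs @ [j]) (ys @ [c])) * WW q (ys @ [c]) / WW q (zs @ [j])) * Xp M m ys zs * M c l))" .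
  qed
  also have "\<dots> = \<iota> (q j l) * (\<Sum>c<n. Gam m j c * M c l)"
  proof -
    have "(\<Sum>zs\<in>idx n m. \<Sum>ys\<in>idx n m. \<Sum>c<n. \<iota> (q j l) * (\<iota> (of_int (NN (Suc m) (zs @ [j]) (ys @ [c])) * WW q (ys @ [c]) / WW q (zs @ [j])) * Xp M m ys zs * M c l))
      = (\<Sum>c<n. \<Sum>zs\<in>idx n m. \<Sum>ys\<in>idx n m. \<iota> (q j l) * (\<iota> (of_int (NN (Suc m) (zs @ [j]) (ys @ [c])) * WW q (ys @ [c]) / WW q (zs @ [j])) * Xp M m ys zs * M c l))"
      apply (subst sum.swap)
      apply (subst (2) sum.swap)
      ..
    then show ?thesis unfolding Gam_def sum_distrib_left sum_distrib_right by (simp add: mult.assoc)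
  qed
  finally show ?thesis .
qed

end


context CH begin

lemma Tsum_const:
  assumes "i \<le> m" "j < n" "l < n"
  shows "Tsum (Suc m) j l i = Tsum (Suc m) j l m"
  using assms(1)
proof (induct i rule: inc_induct)
  case base then show ?case ..
next
  case (step i)
  then show ?case using G4[of i "Suc m" j l] assms by simp
qed

lemma Gam_rec:
  assumes j: "j < n" and l: "l < n"
  shows "Gam (Suc m) j l = (if j = l then Eterm (Suc m) else 0) - of_nat (Suc m) * (\<iota> (q j l) * (\<Sum>c<n. Gam m j c * M c l))"
proof -
  have "Gam (Suc m) j l = (if j = l then Eterm (Suc m) else 0) - (\<Sum>i<Suc m. Tsum (Suc m) j l i)"
  proof -
    have H: "\<And>i. i \<in> {..<Suc m} \<Longrightarrow> (\<Sum>xs\<in>idx n (Suc m). if xs ! i = l then (\<Sum>ys\<in>idx n (Suc m).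
        \<iota> (of_int (NN (Suc m) (xs[i := j]) ys) * WW q (ys @ [l]) / WW q (xs @ [j])) * Xp M (Suc m) ys xs) else 0)
       = Tsum (Suc m) j l i"
      by (rule G3[OF _ j l]) simp
    have S: "(\<Sum>i<Suc m. (\<Sum>xs\<in>idx n (Suc m). if xs ! i = l then (\<Sum>ys\<in>idx n (Suc m).
        \<iota> (of_int (NN (Suc m) (xs[i := j]) ys) * WW q (ys @ [l]) / WW q (xs @ [j])) * Xp M (Suc m) ys xs) else 0))
       = (\<Sum>i<Suc m. Tsum (Suc m) j l i)"
      by (rule sum.cong[OF refl H])
    show ?thesis unfolding G1[OF j l, of "Suc m"] S ..
  qed
  also have "(\<Sum>i<Suc m. Tsum (Suc m) j l i) = (\<Sum>i<Suc m. Tsum (Suc m) j l m)"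
    by (intro sum.cong refl) (rule Tsum_const[OF _ j l], simp)
  also have "\<dots> = of_nat (Suc m) * Tsum (Suc m) j l m"
    by (simp add: of_nat_mult)
  finally show ?thesis using G5[OF j l, of m] by simp
qed

lemma Gam_van:
  assumes "j < n"
  shows "Gam n j l = 0"
  unfolding Gam_def
proof (intro sum.neutral ballI)
  fix xs ys assume xs: "xs \<in> idx n n" and ys: "ys \<in> idx n n"
  have "\<not> distinct (xs @ [j])"
  proof
    assume d: "distinct (xs @ [j])"
    have "set (xs @ [j]) \<subseteq> {..<n}" using xs assms by (auto simp: idx_def)
    then have "card (set (xs @ [j])) \<le> n" using card_mono[of "{..<n}"] by fastforce
    moreover have "card (set (xs @ [j])) = Suc n" using distinct_card[OF d] xs by (simp add: idx_iff)
    ultimately show False by simp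
  qed
  then have "NN (Suc n) (xs @ [j]) (ys @ [l]) = 0"
    using xs by (intro NN_nondistinct) (auto simp: idx_iff)
  then show "\<iota> (of_int (NN (Suc n) (xs @ [j]) (ys @ [l])) * WW q (ys @ [l]) / WW q (xs @ [j])) * Xp M n ys xs = 0"
    by simp
qed

lemma idx0: "idx n 0 = {[]}"
  by (auto simp: idx_def)

lemma NN1: "NN (Suc 0) [j] [l] = (if j = l then 1 else 0)"
  using NN_rec[of "[]" 0 "[]" j l] by (simp add: NN_zero)

lemma Gam0: "Gam 0 j l = (if j = l then 1 else 0)"
  unfolding Gam_def idx0 using NN1[of j l] by (simp add: Xp_def)

lemma ecoef0: "ecoef \<iota> n q M 0 = 1"
  unfolding ecoef_eval Eterm_def idx0 by (simp add: Xp_def NN_zero)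

definition Gn :: "nat \<Rightarrow> nat \<Rightarrow> nat \<Rightarrow> 'a" where
  "Gn m j l = \<iota> (1 / of_nat (fact m)) * Gam m j l"

lemma Gn_rec:
  assumes j: "j < n" and l: "l < n"
  shows "Gn (Suc m) j l = (if j = l then ecoef \<iota> n q M (Suc m) else 0) - \<iota> (q j l) * (\<Sum>c<n. Gn m j c * M c l)"
proof -
  have f: "1 / of_nat (fact (Suc m)) * of_nat (Suc m) = (1 / of_nat (fact m) :: complex)"
  proof -
    have a: "(of_nat (Suc m)::complex) \<noteq> 0" by (rule of_nat_neq_0)
    have b: "(fact m::complex) \<noteq> 0" by simp
    have g: "\<And>a b::complex. a \<noteq> 0 \<Longrightarrow> 1 / (a * b) * a = 1 / b"
      by (case_tac "b = 0") (simp_all add: field_simps)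
    show ?thesis unfolding fact_Suc of_nat_mult of_nat_id of_nat_fact by (rule g[OF a])
  qed
  have "\<iota> (1 / of_nat (fact (Suc m))) * (of_nat (Suc m) * (\<iota> (q j l) * (\<Sum>c<n. Gam m j c * M c l)))
      = \<iota> (1 / of_nat (fact m)) * (\<iota> (q j l) * (\<Sum>c<n. Gam m j c * M c l))"
    unfolding f[symmetric] imul mult.assoc iof_nat[symmetric] ..
  also have "\<dots> = \<iota> (q j l) * (\<Sum>c<n. Gn m j c * M c l)"
    unfolding Gn_def icomm_ii[of "1 / of_nat (fact m)" "q j l"] sum_distrib_left mult.assoc ..
  finally have A: "\<iota> (1 / of_nat (fact (Suc m))) * (of_nat (Suc m) * (\<iota> (q j l) * (\<Sum>c<n. Gam m j c * M c l)))
      = \<iota> (q j l) * (\<Sum>c<n. Gn m j c * M c l)" .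
  show ?thesis
    unfolding Gn_def Gam_rec[OF j l] right_diff_distrib A ecoef_eval by simp
qed

primrec HH :: "nat \<Rightarrow> nat \<Rightarrow> nat \<Rightarrow> 'a" where
  "HH 0 j l = (if j = l then 1 else 0)"
| "HH (Suc m) j l = \<iota> (q j l) * (\<Sum>c<n. HH m j c * M c l)"

lemma Gn_formula:
  assumes j: "j < n"
  shows "l < n \<Longrightarrow> Gn m j l = (\<Sum>k=0..m. (-1) ^ (m - k) * ecoef \<iota> n q M k * HH (m - k) j l)"
proof (induct m arbitrary: l)
  case 0
  then show ?case by (simp add: Gn_def Gam0 ecoef0)
next
  case (Suc m)
  let ?e = "\<lambda>k. ecoef \<iota> n q M k"
  have IH: "\<And>c. c \<in> {..<n} \<Longrightarrow> Gn m j c * M c l = (\<Sum>k=0..m. (-1) ^ (m - k) * ?e k * HH (m - k) j c * M c l)"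
    using Suc.hyps by (simp add: sum_distrib_right)
  have "\<iota> (q j l) * (\<Sum>c<n. Gn m j c * M c l) = \<iota> (q j l) * (\<Sum>c<n. \<Sum>k=0..m. (-1) ^ (m - k) * ?e k * HH (m - k) j c * M c l)"
    by (simp only: sum.cong[OF refl IH])
  also have "\<dots> = (\<Sum>c<n. \<Sum>k=0..m. \<iota> (q j l) * ((-1) ^ (m - k) * ?e k * HH (m - k) j c * M c l))"
    by (simp only: sum_distrib_left)
  also have "\<dots> = (\<Sum>k=0..m. \<Sum>c<n. \<iota> (q j l) * ((-1) ^ (m - k) * ?e k * HH (m - k) j c * M c l))"
    by (rule sum.swap)
  also have "\<dots> = (\<Sum>k=0..m. \<iota> (q j l) * (\<Sum>c<n. (-1) ^ (m - k) * ?e k * HH (m - k) j c * M c l))"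
    by (simp only: sum_distrib_left)
  also have "\<dots> = (\<Sum>k=0..m. (-1) ^ (m - k) * ?e k * HH (Suc (m - k)) j l)"
  proof (intro sum.cong refl)
    fix k
    show "\<iota> (q j l) * (\<Sum>c<n. (-1) ^ (m - k) * ?e k * HH (m - k) j c * M c l) = (-1) ^ (m - k) * ?e k * HH (Suc (m - k)) j l"
      unfolding HH.simps sum_distrib_left mult.assoc icomm2[of "?e k"] icomm2[of "(-1) ^ (m - k)"] ..
  qed
  finally have B: "\<iota> (q j l) * (\<Sum>c<n. Gn m j c * M c l) = (\<Sum>k=0..m. (-1) ^ (m - k) * ?e k * HH (Suc (m - k)) j l)" .
  have C: "(\<Sum>k=0..Suc m. (-1) ^ (Suc m - k) * ?e k * HH (Suc m - k) j l)
      = (\<Sum>k=0..m. (-1) ^ (Suc m - k) * ?e k * HH (Suc m - k) j l) + ?e (Suc m) * HH 0 j l"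
    by simp
  have D: "(\<Sum>k=0..m. (-1) ^ (Suc m - k) * ?e k * HH (Suc m - k) j l) = - (\<Sum>k=0..m. (-1) ^ (m - k) * ?e k * HH (Suc (m - k)) j l)"
    unfolding sum_negf[symmetric] by (intro sum.cong refl) (simp add: Suc_diff_le)
  show ?case unfolding Gn_rec[OF j Suc.prems] B C D by simp
qed

lemma qpow_Suc:
  assumes j: "j < n"
  shows "qpow \<iota> n q M (Suc m) j l = (\<Sum>c<n. \<iota> (q j c) * qpow \<iota> n q M m j c * M c l)"
proof (cases m)
  case 0
  have "\<And>c. \<iota> (q j c) * (if j = c then 1 else 0) * M c l = (if j = c then M j l else 0)"
    using qdiag j by auto
  then show ?thesis using 0 j by (simp add: sum.delta)
next
  case (Suc m')
  have "qpow \<iota> n q M (Suc m) j l = (\<Sum>i<n. \<Sum>a<n. \<Sum>b<n. \<iota> (Pq n q (i, j) (a, b)) * (qpow \<iota> n q M m a i * M b l))"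
    using Suc by (simp add: qstar_def)
  also have "\<dots> = (\<Sum>i<n. \<Sum>a<n. \<Sum>b<n. if b = i then if a = j then \<iota> (q j i) * (qpow \<iota> n q M m a i * M b l) else 0 else 0)"
    using j by (intro sum.cong refl) (auto simp: Pq_eval)
  also have "\<dots> = (\<Sum>c<n. \<iota> (q j c) * qpow \<iota> n q M m j c * M c l)"
    using j by (simp add: sum.delta mult.assoc)
  finally show ?thesis .
qed

lemma HH_qpow:
  assumes j: "j < n"
  shows "l < n \<Longrightarrow> HH m j l = \<iota> (q j l) * qpow \<iota> n q M m j l"
proof (induct m arbitrary: l)
  case 0
  then show ?case using j by (simp add: qdiag)
next
  case (Suc m)
  then show ?case using j by (simp add: qpow_Suc mult.assoc)
qed

end


lemma minus_one_pow_split: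
  assumes "k \<le> n"
  shows "((-1)::'a::ring_1) ^ k = (-1) ^ n * (-1) ^ (n - k)"
proof -
  have e: "n + (n - k) = k + 2 * (n - k)" using assms by simp
  have "((-1)::'a) ^ (n + (n - k)) = (-1) ^ k" unfolding e power_add power_mult by simp
  then show ?thesis by (simp add: power_add)
qed

theorem mainTheorem17:
  fixes \<iota> :: "complex \<Rightarrow> 'a::ring_1"
    and n :: nat
    and q :: "nat \<Rightarrow> nat \<Rightarrow> complex"
    and M :: "nat \<Rightarrow> nat \<Rightarrow> 'a"
  assumes "is_C_algebra \<iota>"
    and "is_parametric n q"
    and "manin \<iota> n q M"
  shows "\<forall>i<n. \<forall>j<n.
    (\<Sum>k=0..n. (-1) ^ k * ecoef \<iota> n q M k * qpow \<iota> n q M (n - k) i j) = 0"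
proof -
  interpret CH \<iota> n q M using assms by unfold_locales
  show ?thesis
  proof (intro allI impI)
    fix i j assume i: "i < n" and j: "j < n"
    let ?e = "\<lambda>k. ecoef \<iota> n q M k"
    let ?S = "\<Sum>k=0..n. (-1) ^ (n - k) * ?e k * qpow \<iota> n q M (n - k) i j"
    have Z: "(\<Sum>k=0..n. (-1) ^ (n - k) * ?e k * HH (n - k) i j) = 0"
      using Gn_formula[OF i j, of n] Gam_van[OF i, of j] by (simp add: Gn_def)
    have "(\<Sum>k=0..n. (-1) ^ (n - k) * ?e k * HH (n - k) i j) = \<iota> (q i j) * ?S"
      unfolding sum_distrib_left
    proof (intro sum.cong refl)
      fix k
      show "(-1) ^ (n - k) * ?e k * HH (n - k) i j = \<iota> (q i j) * ((-1) ^ (n - k) * ?e k * qpow \<iota> n q M (n - k) i j)"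
        unfolding HH_qpow[OF i j] mult.assoc icomm2[of "?e k"] icomm2[of "(-1) ^ (n - k)"] ..
    qed
    then have "\<iota> (q i j) * ?S = 0" using Z by simp
    then have "\<iota> (q j i) * (\<iota> (q i j) * ?S) = 0" by simp
    then have S0: "?S = 0" using iqq[OF j i] by simp
    have "(\<Sum>k=0..n. (-1) ^ k * ?e k * qpow \<iota> n q M (n - k) i j) = (-1) ^ n * ?S"
      unfolding sum_distrib_left
    proof (intro sum.cong refl)
      fix k assume "k \<in> {0..n}"
      then have "k \<le> n" by simp
      show "(-1) ^ k * ?e k * qpow \<iota> n q M (n - k) i j = (-1) ^ n * ((-1) ^ (n - k) * ?e k * qpow \<iota> n q M (n - k) i j)"
        unfolding minus_one_pow_split[OF \<open>k \<le> n\<close>] mult.assoc ..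
    qed
    then show "(\<Sum>k=0..n. (-1) ^ k * ?e k * qpow \<iota> n q M (n - k) i j) = 0" using S0 by simp
  qed
qed


end
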